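(* It is decidable, given a propositional Hilbert-type calculus $\mathbf{C}$ and a finite-valued logic $\mathbf{M}$ over the same language, whether $\mathbf{C}$ is t-sound for $\mathbf{M}$.
   Context: A propositional language has variables $X_1,X_2,\ldots$ and finitely many connectives with arities. A substitution $\sigma$ maps variables to formulas; $F\sigma$ is the result of simultaneously replacing each variable $X$ in $F$ by $\sigma(X)$. A propositional Hilbert-type calculus $\mathbf{C}$ is given by a finite set of axioms (formulas) and a finite set of rules, each consisting of finitely many premise formulas $A_1,\ldots,A_n$ and a conclusion formula $C$. A finite-valued logic $\mathbf{M}$ is given by a finite set $V(\mathbf{M})$ of truth values, designated values $V^+(\mathbf{M})\subseteq V(\mathbf{M})$, and a truth function for each connective; valuations map variables to truth values and extend to formulas; a tautology is a formula that is designated under every valuation. $\mathbf{C}$ is t-sound for $\mathbf{M}$ if all axioms of $\mathbf{C}$ are tautologies of $\mathbf{M}$ and for every rule of $\mathbf{C}$ with premises $A_1,\ldots,A_n$ and conclusion $C$ and every substitution $\sigma$: if $A_1\sigma,\ldots,A_n\sigma$ are all tautologies of $\mathbf{M}$, then $C\sigma$ is a tautology of $\mathbf{M}$. *)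

theory Defs
  imports Main "HOL-Library.Nat_Bijection"
begin

datatype recf = Zero | Succ | Proj nat | Cn recf "recf list" | Pr recf recf | Mn recf

inductive rec_eval :: "recf \<Rightarrow> nat list \<Rightarrow> nat \<Rightarrow> bool" where
  zero: "rec_eval Zero xs 0"
| succ: "rec_eval Succ [x] (Suc x)"
| proj: "i < length xs \<Longrightarrow> rec_eval (Proj i) xs (xs ! i)"
| comp: "list_all2 (\<lambda>g y. rec_eval g xs y) gs ys \<Longrightarrow> rec_eval f ys z
          \<Longrightarrow> rec_eval (Cn f gs) xs z"
| pr0: "rec_eval f xs y \<Longrightarrow> rec_eval (Pr f g) (0 # xs) y"
| prS: "rec_eval (Pr f g) (n # xs) y \<Longrightarrow> rec_eval g (n # y # xs) z
          \<Longrightarrow> rec_eval (Pr f g) (Suc n # xs) z"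
| mu: "rec_eval f (n # xs) 0 \<Longrightarrow> (\<forall>m<n. \<exists>y. rec_eval f (m # xs) y \<and> 0 < y)
          \<Longrightarrow> rec_eval (Mn f) xs n"

text \<open>Variables X_1, X_2, ... are Var 0, Var 1, ...; connectives are numbered 0..k-1,
  a language is given by the list of arities of its connectives.\<close>
datatype form = Var nat | App nat "form list"

type_synonym lang = "nat list"

fun wf_form :: "lang \<Rightarrow> form \<Rightarrow> bool" where
  "wf_form ar (Var x) = True"
| "wf_form ar (App c args) =
     (c < length ar \<and> length args = ar ! c \<and> list_all (wf_form ar) args)"

fun subst :: "(nat \<Rightarrow> form) \<Rightarrow> form \<Rightarrow> form" where
  "subst \<sigma> (Var x) = \<sigma> x"
| "subst \<sigma> (App c args) = App c (map (subst \<sigma>) args)"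

text \<open>A calculus: finite list of axioms and finite list of rules (premises, conclusion).\<close>
type_synonym calculus = "form list \<times> (form list \<times> form) list"

definition wf_calc :: "lang \<Rightarrow> calculus \<Rightarrow> bool" where
  "wf_calc ar C = (list_all (wf_form ar) (fst C) \<and>
     (\<forall>(ps, c) \<in> set (snd C). list_all (wf_form ar) ps \<and> wf_form ar c))"

text \<open>A finite-valued logic: truth values {0..<n}, a list of designated values and,
  for each connective, its truth table: the value at argument tuple vs is at
  position tuple_index n vs (base-n reading of vs).\<close>
type_synonym logic = "nat \<times> nat list \<times> nat list list"

definition nvals :: "logic \<Rightarrow> nat" where "nvals M = fst M"
definition designated :: "logic \<Rightarrow> nat set" where "designated M = set (fst (snd M))"
definition tables :: "logic \<Rightarrow> nat list list" where "tables M = snd (snd M)"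

definition tuple_index :: "nat \<Rightarrow> nat list \<Rightarrow> nat" where
  "tuple_index n vs = foldl (\<lambda>acc v. acc * n + v) 0 vs"

definition truth_fun :: "logic \<Rightarrow> nat \<Rightarrow> nat list \<Rightarrow> nat" where
  "truth_fun M c vs = tables M ! c ! tuple_index (nvals M) vs"

definition wf_logic :: "lang \<Rightarrow> logic \<Rightarrow> bool" where
  "wf_logic ar M = (designated M \<subseteq> {0..<nvals M} \<and> length (tables M) = length ar \<and>
     (\<forall>c < length ar. length (tables M ! c) = nvals M ^ (ar ! c) \<and>
        (\<forall>v \<in> set (tables M ! c). v < nvals M)))"

fun val :: "logic \<Rightarrow> (nat \<Rightarrow> nat) \<Rightarrow> form \<Rightarrow> nat" where
  "val M v (Var x) = v x"
| "val M v (App c args) = truth_fun M c (map (val M v) args)"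

definition tautology :: "logic \<Rightarrow> form \<Rightarrow> bool" where
  "tautology M A = (\<forall>v. (\<forall>x. v x < nvals M) \<longrightarrow> val M v A \<in> designated M)"

definition t_sound :: "lang \<Rightarrow> calculus \<Rightarrow> logic \<Rightarrow> bool" where
  "t_sound ar C M =
    ((\<forall>A \<in> set (fst C). tautology M A) \<and>
     (\<forall>(ps, c) \<in> set (snd C). \<forall>\<sigma>. (\<forall>x. wf_form ar (\<sigma> x)) \<longrightarrow>
        (\<forall>A \<in> set ps. tautology M (subst \<sigma> A)) \<longrightarrow> tautology M (subst \<sigma> c)))"

fun form_code :: "form \<Rightarrow> nat" where
  "form_code (Var x) = prod_encode (0, x)"
| "form_code (App c args) = prod_encode (Suc c, list_encode (map form_code args))"

definition calc_code :: "calculus \<Rightarrow> nat" where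
  "calc_code C = prod_encode (list_encode (map form_code (fst C)),
     list_encode (map (\<lambda>(ps, c). prod_encode (list_encode (map form_code ps), form_code c)) (snd C)))"

definition logic_code :: "logic \<Rightarrow> nat" where
  "logic_code M = prod_encode (fst M, prod_encode (list_encode (fst (snd M)),
     list_encode (map list_encode (snd (snd M)))))"

definition input_code :: "lang \<Rightarrow> calculus \<Rightarrow> logic \<Rightarrow> nat" where
  "input_code ar C M = prod_encode (list_encode ar, prod_encode (calc_code C, logic_code M))"

end

theory Submission
  imports Defs "HOL-Library.FuncSet"
begin

definition rcomp :: "nat \<Rightarrow> ((nat \<Rightarrow> nat) \<Rightarrow> nat) \<Rightarrow> bool" where
  "rcomp k h \<longleftrightarrow> (\<forall>e e'. (\<forall>i<k. e i = e' i) \<longrightarrow> h e = h e') \<and>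
     (\<exists>f. \<forall>e. rec_eval f (map e [0..<k]) (h e))"

definition rpred :: "nat \<Rightarrow> ((nat \<Rightarrow> nat) \<Rightarrow> bool) \<Rightarrow> bool" where
  "rpred k P \<longleftrightarrow> rcomp k (\<lambda>e. if P e then 1 else 0)"

lemma rcomp_dep: "rcomp k h \<Longrightarrow> (\<And>i. i < k \<Longrightarrow> e i = e' i) \<Longrightarrow> h e = h e'"
  unfolding rcomp_def by blast

lemma rc_zero: "rcomp k (\<lambda>e. 0)"
  unfolding rcomp_def by (auto intro: rec_eval.zero)

lemma rc_var: "i < k \<Longrightarrow> rcomp k (\<lambda>e. e i)"
  unfolding rcomp_def
  apply (intro conjI)
   apply blast
  apply (rule exI[of _ "Proj i"])
  using rec_eval.proj[of i "map e [0..<k]" for e] by auto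

lemma rc_suc: "rcomp k a \<Longrightarrow> rcomp k (\<lambda>e. Suc (a e))"
  unfolding rcomp_def
proof (elim conjE exE, intro conjI)
  fix f assume f: "\<forall>e. rec_eval f (map e [0..<k]) (a e)"
  show "\<exists>f. \<forall>e. rec_eval f (map e [0..<k]) (Suc (a e))"
    apply (rule exI[of _ "Cn Succ [f]"])
    using f by (auto intro!: rec_eval.comp[where ys="[a e]" for e] rec_eval.succ)
qed auto

lemma rc_comp_aux:
  assumes "\<forall>h\<in>set hs. rcomp k h"
  shows "\<exists>fs. \<forall>e. list_all2 (\<lambda>g y. rec_eval g (map e [0..<k]) y) fs (map (\<lambda>h. h e) hs)"
  using assms
proof (induction hs)
  case Nil
  then show ?case by (auto intro: exI[of _ "[]"])
next
  case (Cons h hs)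
  then obtain fs where fs: "\<forall>e. list_all2 (\<lambda>g y. rec_eval g (map e [0..<k]) y) fs (map (\<lambda>h. h e) hs)"
    by auto
  from Cons.prems obtain f where f: "\<forall>e. rec_eval f (map e [0..<k]) (h e)"
    unfolding rcomp_def by auto
  show ?case
  proof (intro exI allI)
    fix e show "list_all2 (\<lambda>g y. rec_eval g (map e [0..<k]) y) (f # fs) (map (\<lambda>h. h e) (h # hs))"
      using fs f by simp
  qed
qed

lemma rc_comp:
  assumes "rcomp (length hs) g" "\<forall>h\<in>set hs. rcomp k h"
  shows "rcomp k (\<lambda>e. g (\<lambda>i. if i < length hs then (hs ! i) e else 0))"
proof -
  obtain fs where fs: "\<forall>e. list_all2 (\<lambda>g y. rec_eval g (map e [0..<k]) y) fs (map (\<lambda>h. h e) hs)"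
    using rc_comp_aux[OF assms(2)] by auto
  obtain f where f: "\<forall>e. rec_eval f (map e [0..<length hs]) (g e)"
    using assms(1) unfolding rcomp_def by auto
  have eq: "map (\<lambda>h. h e) hs = map (\<lambda>i. if i < length hs then (hs ! i) e else 0) [0..<length hs]" for e
    by (rule nth_equalityI) auto
  have dep: "(\<lambda>i. if i < length hs then (hs ! i) e else 0) = (\<lambda>i. if i < length hs then (hs ! i) e' else 0)"
    if "\<forall>i<k. e i = e' i" for e e'
  proof (rule ext)
    fix i show "(if i < length hs then (hs ! i) e else 0) = (if i < length hs then (hs ! i) e' else 0)"
    proof (cases "i < length hs")
      case True
      have "rcomp k (hs ! i)" using assms(2) True by simp
      then have "(hs ! i) e = (hs ! i) e'" by (rule rcomp_dep) (use that in blast)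
      then show ?thesis by simp
    qed simp
  qed
  have ev: "rec_eval (Cn f fs) (map e [0..<k]) (g (\<lambda>i. if i < length hs then (hs ! i) e else 0))" for e
  proof -
    have "rec_eval f (map (\<lambda>h. h e) hs) (g (\<lambda>i. if i < length hs then (hs ! i) e else 0))"
      using f eq[of e] by metis
    then show ?thesis by (rule rec_eval.comp[OF fs[rule_format]])
  qed
  show ?thesis unfolding rcomp_def
  proof (intro conjI allI impI exI)
    fix e e' :: "nat \<Rightarrow> nat" assume "\<forall>i<k. e i = e' i"
    then show "g (\<lambda>i. if i < length hs then (hs ! i) e else 0) = g (\<lambda>i. if i < length hs then (hs ! i) e' else 0)"
      using dep by metis
  next
    fix e show "rec_eval (Cn f fs) (map e [0..<k]) (g (\<lambda>i. if i < length hs then (hs ! i) e else 0))"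
      by (rule ev)
  qed
qed

definition econs :: "nat \<Rightarrow> (nat \<Rightarrow> nat) \<Rightarrow> nat \<Rightarrow> nat" where
  "econs x f = (\<lambda>i. case i of 0 \<Rightarrow> x | Suc j \<Rightarrow> f j)"

lemma econs_simps[simp]: "econs x e 0 = x" "econs x e (Suc i) = e i"
  by (auto simp: econs_def)

lemma map_econs: "map (econs x e) [0..<Suc k] = x # map e [0..<k]"
  by (induction k) auto

fun prfn :: "((nat \<Rightarrow> nat) \<Rightarrow> nat) \<Rightarrow> ((nat \<Rightarrow> nat) \<Rightarrow> nat) \<Rightarrow> nat \<Rightarrow> (nat \<Rightarrow> nat) \<Rightarrow> nat" where
  "prfn a s 0 env = a env"
| "prfn a s (Suc m) env = s (econs m (econs (prfn a s m env) env))"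

lemma rc_pr:
  assumes "rcomp k a" "rcomp (Suc (Suc k)) s"
  shows "rcomp (Suc k) (\<lambda>e. prfn a s (e 0) (\<lambda>i. e (Suc i)))"
proof -
  obtain fa where fa: "\<forall>e. rec_eval fa (map e [0..<k]) (a e)"
    using assms(1) unfolding rcomp_def by blast
  obtain fs where fs: "\<forall>e. rec_eval fs (map e [0..<Suc (Suc k)]) (s e)"
    using assms(2) unfolding rcomp_def by blast
  have *: "rec_eval (Pr fa fs) (m # map e [0..<k]) (prfn a s m e)" for m e
  proof (induction m)
    case 0
    then show ?case using fa by (simp add: rec_eval.pr0)
  next
    case (Suc m)
    have "rec_eval fs (map (econs m (econs (prfn a s m e) e)) [0..<Suc (Suc k)]) (s (econs m (econs (prfn a s m e) e)))"
      using fs by blast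
    then have "rec_eval fs (m # prfn a s m e # map e [0..<k]) (prfn a s (Suc m) e)"
      by (simp only: map_econs prfn.simps)
    then show ?case by (rule rec_eval.prS[OF Suc])
  qed
  have **: "map e [0..<Suc k] = e 0 # map (\<lambda>i. e (Suc i)) [0..<k]" for e :: "nat \<Rightarrow> nat"
  proof -
    have "econs (e 0) (\<lambda>i. e (Suc i)) = e" by (rule ext) (simp add: econs_def split: nat.split)
    then show ?thesis using map_econs[of "e 0" "\<lambda>i. e (Suc i)" k] by simp
  qed
  have dep: "prfn a s m e = prfn a s m e'" if "\<forall>i<k. e i = e' i" for m e e'
  proof (induction m)
    case 0
    show ?case using rcomp_dep[OF assms(1), of e e'] that by simp
  next
    case (Suc m)
    show ?case apply simp
      apply (rule rcomp_dep[OF assms(2)])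
      using that Suc by (auto simp: econs_def split: nat.split)
  qed
  show ?thesis unfolding rcomp_def
    apply (intro conjI)
    subgoal proof (intro allI impI)
      fix e e' :: "nat \<Rightarrow> nat" assume h: "\<forall>i<Suc k. e i = e' i"
      then have "\<forall>i<k. e (Suc i) = e' (Suc i)" by simp
      then have "prfn a s m (\<lambda>i. e (Suc i)) = prfn a s m (\<lambda>i. e' (Suc i))" for m by (rule dep)
      then show "prfn a s (e 0) (\<lambda>i. e (Suc i)) = prfn a s (e' 0) (\<lambda>i. e' (Suc i))"
        using h by simp
    qed
    apply (intro exI[of _ "Pr fa fs"] allI)
    subgoal for e using *[of "e 0" "\<lambda>i. e (Suc i)"] ** by simp
    done
qed

fun prec :: "(nat \<Rightarrow> nat \<Rightarrow> nat) \<Rightarrow> nat \<Rightarrow> nat \<Rightarrow> nat" where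
  "prec s a 0 = a"
| "prec s a (Suc n) = s n (prec s a n)"

lemma rc_prec:
  assumes "rcomp k a" "rcomp k c" "rcomp (Suc (Suc k)) (\<lambda>e. s (\<lambda>i. e (Suc (Suc i))) (e 0) (e 1))"
  shows "rcomp k (\<lambda>e. prec (s e) (a e) (c e))"
proof -
  let ?s = "\<lambda>e. s (\<lambda>i. e (Suc (Suc i))) (e 0) (e 1)"
  have eq: "prfn a ?s m e = prec (s e) (a e) m" for m e
    by (induction m) auto
  have 1: "rcomp (Suc k) (\<lambda>e. prec (s (\<lambda>i. e (Suc i))) (a (\<lambda>i. e (Suc i))) (e 0))"
    using rc_pr[OF assms(1) assms(3)] unfolding eq .
  let ?hs = "c # map (\<lambda>i e. e i) [0..<k]"
  have 2: "\<forall>h\<in>set ?hs. rcomp k h" using assms(2) by (auto intro: rc_var)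
  have 3: "rcomp k (\<lambda>e. (\<lambda>e. prec (s (\<lambda>i. e (Suc i))) (a (\<lambda>i. e (Suc i))) (e 0))
             (\<lambda>i. if i < length ?hs then (?hs ! i) e else 0))"
    by (rule rc_comp[OF _ 2]) (use 1 in simp)
  have 4: "(\<lambda>i. (\<lambda>i. if i < length ?hs then (?hs ! i) e else 0) (Suc i)) = (\<lambda>i. if i < k then e i else 0)" for e
    by (rule ext) auto
  have 5: "(\<lambda>e. prec (s (\<lambda>i. e (Suc i))) (a (\<lambda>i. e (Suc i))) (e 0))
             (\<lambda>i. if i < length ?hs then (?hs ! i) e else 0) = prec (s e) (a e) (c e)" for e
  proof -
    let ?e' = "\<lambda>i. if i < k then e i else 0"
    have a: "a ?e' = a e" by (rule rcomp_dep[OF assms(1)]) simp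
    have s: "s ?e' m y = s e m y" for m y
      using rcomp_dep[OF assms(3), of "econs m (econs y ?e')" "econs m (econs y e)"]
      by (simp add: econs_def split: nat.split)
    have "prec (s ?e') (a ?e') n = prec (s e) (a e) n" for n
      by (induction n) (simp_all add: a s)
    then show ?thesis using 4[of e] by simp
  qed
  show ?thesis using 3 5 by simp
qed

named_theorems rci

lemma rc_lift1:
  assumes "rcomp 1 (\<lambda>e. F (e 0))" "rcomp k a"
  shows "rcomp k (\<lambda>e. F (a e))"
proof -
  have l: "length [a] = 1" by simp
  have "rcomp (length [a]) (\<lambda>e. F (e 0))" unfolding l by (rule assms(1))
  from rc_comp[OF this]
  have "rcomp k (\<lambda>e. (\<lambda>e. F (e 0)) (\<lambda>i. if i < length [a] then ([a] ! i) e else 0))"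
    using assms by simp
  then show ?thesis by (simp add: numeral_eq_Suc)
qed

lemma rc_lift2:
  assumes "rcomp 2 (\<lambda>e. F (e 0) (e 1))" "rcomp k a" "rcomp k b"
  shows "rcomp k (\<lambda>e. F (a e) (b e))"
proof -
  have l: "length [a, b] = 2" by simp
  have "rcomp (length [a, b]) (\<lambda>e. F (e 0) (e 1))" unfolding l by (rule assms(1))
  from rc_comp[OF this]
  have "rcomp k (\<lambda>e. (\<lambda>e. F (e 0) (e 1)) (\<lambda>i. if i < length [a, b] then ([a, b] ! i) e else 0))"
    using assms by simp
  then show ?thesis by (simp add: numeral_eq_Suc)
qed

lemma rc_lift3:
  assumes "rcomp 3 (\<lambda>e. F (e 0) (e 1) (e 2))" "rcomp k a" "rcomp k b" "rcomp k c"
  shows "rcomp k (\<lambda>e. F (a e) (b e) (c e))"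
proof -
  have l: "length [a, b, c] = 3" by simp
  have "rcomp (length [a, b, c]) (\<lambda>e. F (e 0) (e 1) (e 2))" unfolding l by (rule assms(1))
  from rc_comp[OF this]
  have "rcomp k (\<lambda>e. (\<lambda>e. F (e 0) (e 1) (e 2)) (\<lambda>i. if i < length [a, b, c] then ([a, b, c] ! i) e else 0))"
    using assms by simp
  then show ?thesis by (simp add: numeral_eq_Suc)
qed

lemma rc_lift4:
  assumes "rcomp 4 (\<lambda>e. F (e 0) (e 1) (e 2) (e 3))" "rcomp k a" "rcomp k b" "rcomp k c" "rcomp k d"
  shows "rcomp k (\<lambda>e. F (a e) (b e) (c e) (d e))"
proof -
  have l: "length [a, b, c, d] = 4" by simp
  have "rcomp (length [a, b, c, d]) (\<lambda>e. F (e 0) (e 1) (e 2) (e 3))" unfolding l by (rule assms(1))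
  from rc_comp[OF this]
  have "rcomp k (\<lambda>e. (\<lambda>e. F (e 0) (e 1) (e 2) (e 3)) (\<lambda>i. if i < length [a, b, c, d] then ([a, b, c, d] ! i) e else 0))"
    using assms by simp
  then show ?thesis by (simp add: numeral_eq_Suc)
qed

lemma rc_lift5:
  assumes "rcomp 5 (\<lambda>e. F (e 0) (e 1) (e 2) (e 3) (e 4))" "rcomp k a" "rcomp k b" "rcomp k c" "rcomp k d" "rcomp k g"
  shows "rcomp k (\<lambda>e. F (a e) (b e) (c e) (d e) (g e))"
proof -
  have l: "length [a, b, c, d, g] = 5" by simp
  have "rcomp (length [a, b, c, d, g]) (\<lambda>e. F (e 0) (e 1) (e 2) (e 3) (e 4))" unfolding l by (rule assms(1))
  from rc_comp[OF this]
  have "rcomp k (\<lambda>e. (\<lambda>e. F (e 0) (e 1) (e 2) (e 3) (e 4)) (\<lambda>i. if i < length [a, b, c, d, g] then ([a, b, c, d, g] ! i) e else 0))"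
    using assms by simp
  then show ?thesis by (simp add: numeral_eq_Suc)
qed

lemma rc_reindex:
  assumes "rcomp m h" "\<And>j. j < m \<Longrightarrow> p j < k"
  shows "rcomp k (\<lambda>e. h (\<lambda>i. e (p i)))"
proof -
  let ?hs = "map (\<lambda>j (e::nat\<Rightarrow>nat). e (p j)) [0..<m]"
  have "rcomp k (\<lambda>e. h (\<lambda>i. if i < length ?hs then (?hs ! i) e else 0))"
  proof (rule rc_comp[of ?hs h k])
    show "rcomp (length ?hs) h" using assms(1) by simp
    show "\<forall>h\<in>set ?hs. rcomp k h" using assms(2) by (auto intro: rc_var)
  qed
  moreover have "h (\<lambda>i. if i < length ?hs then (?hs ! i) e else 0) = h (\<lambda>i. e (p i))" for e
    by (rule rcomp_dep[OF assms(1)]) simp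
  ultimately show ?thesis by simp
qed

lemma rc_const[rci]: "rcomp k (\<lambda>e. c)"
  by (induction c) (auto intro: rc_zero rc_suc)

declare rc_var[rci] rc_suc[rci]

lemma rc_prec'[rci]:
  assumes "rcomp k a" "rcomp k c" "rcomp (Suc (Suc k)) (\<lambda>e. s (\<lambda>i. e (Suc (Suc i))) (e 0) (e 1))"
  shows "rcomp k (\<lambda>e. prec (s e) (a e) (c e))"
  using rc_prec[OF assms] .

lemma add_prec: "a + b = prec (\<lambda>_ y. Suc y) a b"
  by (induction b) auto

lemma rc_add[rci]: "rcomp k a \<Longrightarrow> rcomp k b \<Longrightarrow> rcomp k (\<lambda>e. a e + b e)"
  apply (rule rc_lift2[where F="(+)"])
   apply (simp only: add_prec)
  by (rule rc_prec; simp add: rc_var rc_suc)+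


lemma pred_prec': "prec (\<lambda>m _. m) 0 a = a - 1"
  by (induction a) auto

lemma rc_pred[rci]: "rcomp k a \<Longrightarrow> rcomp k (\<lambda>e. a e - 1)"
proof (rule rc_lift1[where F="\<lambda>x. x - 1"])
  have "rcomp 1 (\<lambda>e. prec (\<lambda>m _. m) 0 (e 0))" by (intro rci; simp?)
  then show "rcomp 1 (\<lambda>e. e 0 - 1)" by (simp only: pred_prec')
qed

lemma sub_prec: "prec (\<lambda>_ y. y - 1) a b = a - b"
  by (induction b) auto

lemma rc_sub[rci]: "rcomp k a \<Longrightarrow> rcomp k b \<Longrightarrow> rcomp k (\<lambda>e. a e - b e)"
proof (rule rc_lift2[where F="(-)"])
  have "rcomp 2 (\<lambda>e. prec (\<lambda>_ y. y - 1) (e 0) (e 1))" by (intro rci; simp?)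
  then show "rcomp 2 (\<lambda>e. e 0 - e 1)" by (simp only: sub_prec)
qed

lemma mult_prec: "prec (\<lambda>_ y. y + a) 0 b = a * b"
  by (induction b) auto

lemma rc_mult[rci]: "rcomp k a \<Longrightarrow> rcomp k b \<Longrightarrow> rcomp k (\<lambda>e. a e * b e)"
proof (rule rc_lift2[where F="(*)"])
  have "rcomp 2 (\<lambda>e. prec (\<lambda>_ y. y + e 0) 0 (e 1))" by (intro rci; simp?)
  then show "rcomp 2 (\<lambda>e. e 0 * e 1)" by (simp only: mult_prec)
qed

lemma pow_prec: "prec (\<lambda>_ y. y * a) 1 b = a ^ b"
  by (induction b) auto

lemma rc_pow[rci]: "rcomp k a \<Longrightarrow> rcomp k b \<Longrightarrow> rcomp k (\<lambda>e. a e ^ b e)"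
proof (rule rc_lift2[where F="(^)"])
  have "rcomp 2 (\<lambda>e. prec (\<lambda>_ y. y * e 0) 1 (e 1))" by (intro rci; simp?)
  then show "rcomp 2 (\<lambda>e. e 0 ^ e 1)" by (simp only: pow_prec)
qed

lemma rc_if[rci]:
  assumes "rpred k P" "rcomp k a" "rcomp k b"
  shows "rcomp k (\<lambda>e. if P e then a e else b e)"
proof -
  have I: "rcomp k (\<lambda>e. if P e then 1 else 0)" using assms(1) unfolding rpred_def .
  have "rcomp k (\<lambda>e. (if P e then 1 else 0) * a e + (1 - (if P e then 1 else 0)) * b e)"
    by (rule rc_add[OF rc_mult[OF I assms(2)] rc_mult[OF rc_sub[OF rc_const I] assms(3)]])
  moreover have "(\<lambda>e. (if P e then 1 else 0) * a e + (1 - (if P e then 1 else 0)) * b e) = (\<lambda>e. if P e then a e else b e)"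
    by auto
  ultimately show ?thesis by simp
qed

lemma rp_const[rci]: "rpred k (\<lambda>e. c)"
  unfolding rpred_def by (cases c) (simp_all add: rc_const)

lemma rp_eq[rci]: "rcomp k a \<Longrightarrow> rcomp k b \<Longrightarrow> rpred k (\<lambda>e. a e = b e)"
  unfolding rpred_def
proof -
  assume "rcomp k a" "rcomp k b"
  then have "rcomp k (\<lambda>e. 1 - ((a e - b e) + (b e - a e)))" by (intro rc_sub rc_add rc_const)
  moreover have "(\<lambda>e. 1 - ((a e - b e) + (b e - a e))) = (\<lambda>e. if a e = b e then 1 else 0)"
    by auto
  ultimately show "rcomp k (\<lambda>e. if a e = b e then 1 else 0)" by simp
qed

lemma rp_less[rci]: "rcomp k a \<Longrightarrow> rcomp k b \<Longrightarrow> rpred k (\<lambda>e. a e < b e)"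
  unfolding rpred_def
proof -
  assume "rcomp k a" "rcomp k b"
  then have "rcomp k (\<lambda>e. 1 - (1 - (b e - a e)))" by (intro rc_sub rc_const)
  moreover have "(\<lambda>e. 1 - (1 - (b e - a e))) = (\<lambda>e. if a e < b e then 1 else 0)"
    by auto
  ultimately show "rcomp k (\<lambda>e. if a e < b e then 1 else 0)" by simp
qed

lemma rp_le[rci]: "rcomp k a \<Longrightarrow> rcomp k b \<Longrightarrow> rpred k (\<lambda>e. a e \<le> b e)"
  unfolding rpred_def
proof -
  assume "rcomp k a" "rcomp k b"
  then have "rcomp k (\<lambda>e. 1 - (a e - b e))" by (intro rc_sub rc_const)
  moreover have "(\<lambda>e. 1 - (a e - b e)) = (\<lambda>e. if a e \<le> b e then 1 else 0)"
    by auto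
  ultimately show "rcomp k (\<lambda>e. if a e \<le> b e then 1 else 0)" by simp
qed

lemma rp_not[rci]: "rpred k P \<Longrightarrow> rpred k (\<lambda>e. \<not> P e)"
  unfolding rpred_def
proof -
  assume "rcomp k (\<lambda>e. if P e then 1 else 0)"
  then have "rcomp k (\<lambda>e. 1 - (if P e then 1 else 0))" by (intro rc_sub rc_const)
  moreover have "(\<lambda>e. 1 - (if P e then 1 else 0)) = (\<lambda>e. if \<not> P e then 1 else (0::nat))"
    by auto
  ultimately show "rcomp k (\<lambda>e. if \<not> P e then 1 else 0)" by simp
qed

lemma rp_and[rci]: "rpred k P \<Longrightarrow> rpred k Q \<Longrightarrow> rpred k (\<lambda>e. P e \<and> Q e)"
  unfolding rpred_def
proof -
  assume "rcomp k (\<lambda>e. if P e then 1 else 0)" "rcomp k (\<lambda>e. if Q e then 1 else 0)"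
  then have "rcomp k (\<lambda>e. (if P e then 1 else 0) * (if Q e then 1 else 0))" by (rule rc_mult)
  moreover have "(\<lambda>e. (if P e then 1 else 0) * (if Q e then 1 else 0)) = (\<lambda>e. if P e \<and> Q e then 1 else (0::nat))"
    by auto
  ultimately show "rcomp k (\<lambda>e. if P e \<and> Q e then 1 else 0)" by simp
qed

lemma rp_or[rci]: "rpred k P \<Longrightarrow> rpred k Q \<Longrightarrow> rpred k (\<lambda>e. P e \<or> Q e)"
proof -
  assume "rpred k P" "rpred k Q"
  then have "rpred k (\<lambda>e. \<not> (\<not> P e \<and> \<not> Q e))" by (intro rp_not rp_and)
  then show ?thesis by simp
qed

lemma rp_imp[rci]: "rpred k P \<Longrightarrow> rpred k Q \<Longrightarrow> rpred k (\<lambda>e. P e \<longrightarrow> Q e)"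
proof -
  assume "rpred k P" "rpred k Q"
  then have "rpred k (\<lambda>e. \<not> (P e \<and> \<not> Q e))" by (intro rp_not rp_and)
  then show ?thesis by simp
qed

lemma rp_reindex2:
  assumes "rpred (Suc k) (\<lambda>e. P (\<lambda>i. e (Suc i)) (e 0))"
  shows "rpred (Suc (Suc k)) (\<lambda>e. P (\<lambda>i. e (Suc (Suc i))) (e 0))"
proof -
  have "rcomp (Suc (Suc k)) (\<lambda>e. (\<lambda>e. if P (\<lambda>i. e (Suc i)) (e 0) then 1 else 0) (\<lambda>i. e (if i = 0 then 0 else Suc i)))"
    by (rule rc_reindex) (use assms in \<open>auto simp: rpred_def\<close>)
  then show ?thesis unfolding rpred_def by simp
qed

lemma ball_prec: "prec (\<lambda>i acc. if P i then acc else 0) 1 n = (if \<forall>i<n. P i then 1 else 0)"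
  by (induction n) (auto simp: less_Suc_eq)

lemma rp_ball[rci]:
  assumes "rcomp k a" "rpred (Suc k) (\<lambda>e. P (\<lambda>i. e (Suc i)) (e 0))"
  shows "rpred k (\<lambda>e. \<forall>i<a e. P e i)"
proof -
  have "rcomp k (\<lambda>e. prec (\<lambda>i acc. if P e i then acc else 0) 1 (a e))"
    by (intro rci rp_reindex2 assms; simp?)
  then show ?thesis unfolding rpred_def ball_prec .
qed

lemma rp_bex[rci]:
  assumes "rcomp k a" "rpred (Suc k) (\<lambda>e. P (\<lambda>i. e (Suc i)) (e 0))"
  shows "rpred k (\<lambda>e. \<exists>i<a e. P e i)"
proof -
  have "rpred k (\<lambda>e. \<not> (\<forall>i<a e. \<not> P e i))"
    by (intro rci assms)
  then show ?thesis by simp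
qed

definition bmin :: "nat \<Rightarrow> (nat \<Rightarrow> bool) \<Rightarrow> nat" where
  "bmin n P = (if \<exists>i<n. P i then LEAST i. P i else n)"

lemma bmin_Suc: "bmin (Suc n) P = (if bmin n P < n then bmin n P else if P n then n else Suc n)"
proof (cases "\<exists>i<n. P i")
  case True
  then obtain i where "i < n" "P i" by auto
  then have "(LEAST i. P i) < n" by (meson Least_le le_less_trans)
  then show ?thesis using True by (auto simp: bmin_def less_Suc_eq)
next
  case False
  then have "(LEAST i. P i) = n" if "P n" using that by (metis Least_equality not_less)
  then show ?thesis using False by (auto simp: bmin_def less_Suc_eq)
qed

lemma bmin_prec: "prec (\<lambda>i acc. if acc < i then acc else if P i then i else Suc i) 0 n = bmin n P"
  by (induction n) (simp_all add: bmin_Suc, simp add: bmin_def)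

lemma rc_bmin[rci]:
  assumes "rcomp k a" "rpred (Suc k) (\<lambda>e. P (\<lambda>i. e (Suc i)) (e 0))"
  shows "rcomp k (\<lambda>e. bmin (a e) (P e))"
proof -
  have "rcomp k (\<lambda>e. prec (\<lambda>i acc. if acc < i then acc else if P e i then i else Suc i) 0 (a e))"
    by (intro rci rp_reindex2 assms; simp?)
  then show ?thesis unfolding bmin_prec .
qed

lemma bmin_eqI: "i < n \<Longrightarrow> P i \<Longrightarrow> (\<And>j. j < i \<Longrightarrow> \<not> P j) \<Longrightarrow> bmin n P = i"
proof -
  assume a: "i < n" "P i" "\<And>j. j < i \<Longrightarrow> \<not> P j"
  have "(LEAST i. P i) = i"
  proof (rule Least_equality)
    show "P i" by fact
    fix y assume "P y" then show "i \<le> y" using a(3) by (meson not_less)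
  qed
  then show ?thesis using a unfolding bmin_def by auto
qed

lemma div_bmin: "b > 0 \<Longrightarrow> a div b = bmin (Suc a) (\<lambda>q. a < Suc q * b)"
proof (rule sym, rule bmin_eqI)
  assume b: "b > 0"
  show "a div b < Suc a" using b by (simp add: le_imp_less_Suc div_le_dividend)
  show "a < Suc (a div b) * b" using b
    by (metis add.commute div_mult_mod_eq mod_less_divisor mult_Suc nat_add_left_cancel_less)
  fix j assume "j < a div b"
  then have "Suc j \<le> a div b" by simp
  then have "Suc j * b \<le> a div b * b" by (rule mult_le_mono1)
  also have "\<dots> \<le> a" by (rule div_times_less_eq_dividend)
  finally show "\<not> a < Suc j * b" by simp
qed

lemma rc_div[rci]: "rcomp k a \<Longrightarrow> rcomp k b \<Longrightarrow> rcomp k (\<lambda>e. a e div b e)"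
proof -
  assume A: "rcomp k a" "rcomp k b"
  have "rcomp 2 (\<lambda>e. if e 1 = 0 then 0 else bmin (Suc (e 0)) (\<lambda>q. e 0 < Suc q * e 1))"
    by (intro rci; simp?)
  moreover have eq: "(\<lambda>e. if e 1 = 0 then 0 else bmin (Suc (e 0)) (\<lambda>q. e 0 < Suc q * e 1)) = (\<lambda>e. e 0 div e 1)"
    by (auto simp: div_bmin)
  ultimately have "rcomp 2 (\<lambda>e::nat\<Rightarrow>nat. e 0 div e 1)" unfolding eq by simp
  then show ?thesis using A by (rule rc_lift2)
qed

lemma rc_mod[rci]: "rcomp k a \<Longrightarrow> rcomp k b \<Longrightarrow> rcomp k (\<lambda>e. a e mod b e)"
proof -
  assume A: "rcomp k a" "rcomp k b"
  have "rcomp k (\<lambda>e. a e - a e div b e * b e)" by (intro rc_sub rc_mult rc_div A)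
  then show ?thesis by (simp add: minus_div_mult_eq_mod)
qed

lemma rc_let[rci]:
  assumes "rcomp (Suc k) (\<lambda>e. F (\<lambda>i. e (Suc i)) (e 0))" "rcomp k x"
  shows "rcomp k (\<lambda>e. Let (x e) (F e))"
proof -
  let ?G = "\<lambda>e. F (\<lambda>i. e (Suc i)) (e 0)"
  let ?hs = "x # map (\<lambda>i (e::nat\<Rightarrow>nat). e i) [0..<k]"
  have 1: "rcomp k (\<lambda>e. ?G (\<lambda>i. if i < length ?hs then (?hs ! i) e else 0))"
  proof (rule rc_comp)
    show "rcomp (length ?hs) ?G" using assms(1) by simp
    show "\<forall>h\<in>set ?hs. rcomp k h" using assms(2) by (auto intro: rc_var)
  qed
  have 2: "?G (\<lambda>i. if i < length ?hs then (?hs ! i) e else 0) = Let (x e) (F e)" for e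
  proof -
    have "?G (\<lambda>i. if i < length ?hs then (?hs ! i) e else 0) = ?G (econs (x e) e)"
      by (rule rcomp_dep[OF assms(1)]) (auto simp: econs_def nth_Cons split: nat.split)
    then show ?thesis by (simp add: econs_def)
  qed
  show ?thesis using 1 unfolding 2 .
qed

lemma rc_pe[rci]: "rcomp k a \<Longrightarrow> rcomp k b \<Longrightarrow> rcomp k (\<lambda>e. prod_encode (a e, b e))"
proof (rule rc_lift2[where F="\<lambda>a b. prod_encode (a, b)"])
  have "rcomp 2 (\<lambda>e. (e 0 + e 1) * Suc (e 0 + e 1) div 2 + e 0)" by (intro rci; simp?)
  then show "rcomp 2 (\<lambda>e. prod_encode (e 0, e 1))" by (simp add: prod_encode_def triangle_def)
qed

lemma pfst_bmin: "fst (prod_decode m) = bmin (Suc m) (\<lambda>a. \<exists>b<Suc m. prod_encode (a, b) = m)"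
proof -
  obtain a0 b0 where d: "prod_decode m = (a0, b0)" by fastforce
  then have e: "prod_encode (a0, b0) = m" by (metis prod_decode_inverse)
  have "bmin (Suc m) (\<lambda>a. \<exists>b<Suc m. prod_encode (a, b) = m) = a0"
  proof (rule bmin_eqI)
    show "a0 < Suc m" using le_prod_encode_1[of a0 b0] e by simp
    show "\<exists>b<Suc m. prod_encode (a0, b) = m" using le_prod_encode_2[of b0 a0] e by (auto intro!: exI[of _ b0])
    fix j assume "j < a0"
    then show "\<not> (\<exists>b<Suc m. prod_encode (j, b) = m)" using e by auto
  qed
  then show ?thesis using d by simp
qed

lemma psnd_bmin: "snd (prod_decode m) = bmin (Suc m) (\<lambda>b. \<exists>a<Suc m. prod_encode (a, b) = m)"
proof -
  obtain a0 b0 where d: "prod_decode m = (a0, b0)" by fastforce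
  then have e: "prod_encode (a0, b0) = m" by (metis prod_decode_inverse)
  have "bmin (Suc m) (\<lambda>b. \<exists>a<Suc m. prod_encode (a, b) = m) = b0"
  proof (rule bmin_eqI)
    show "b0 < Suc m" using le_prod_encode_2[of b0 a0] e by simp
    show "\<exists>a<Suc m. prod_encode (a, b0) = m" using le_prod_encode_1[of a0 b0] e by (auto intro!: exI[of _ a0])
    fix j assume "j < b0"
    then show "\<not> (\<exists>a<Suc m. prod_encode (a, j) = m)" using e by auto
  qed
  then show ?thesis using d by simp
qed

lemma rc_pfst[rci]: "rcomp k a \<Longrightarrow> rcomp k (\<lambda>e. fst (prod_decode (a e)))"
proof (rule rc_lift1[where F="\<lambda>m. fst (prod_decode m)"])
  have "rcomp 1 (\<lambda>e. bmin (Suc (e 0)) (\<lambda>a. \<exists>b<Suc (e 0). prod_encode (a, b) = e 0))" by (intro rci; simp?)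
  then show "rcomp 1 (\<lambda>e. fst (prod_decode (e 0)))" by (simp only: pfst_bmin)
qed

lemma rc_psnd[rci]: "rcomp k a \<Longrightarrow> rcomp k (\<lambda>e. snd (prod_decode (a e)))"
proof (rule rc_lift1[where F="\<lambda>m. snd (prod_decode m)"])
  have "rcomp 1 (\<lambda>e. bmin (Suc (e 0)) (\<lambda>b. \<exists>a<Suc (e 0). prod_encode (a, b) = e 0))" by (intro rci; simp?)
  then show "rcomp 1 (\<lambda>e. snd (prod_decode (e 0)))" by (simp only: psnd_bmin)
qed

definition pfst :: "nat \<Rightarrow> nat" where "pfst m = fst (prod_decode m)"
definition psnd :: "nat \<Rightarrow> nat" where "psnd m = snd (prod_decode m)"

lemma rc_pfst'[rci]: "rcomp k a \<Longrightarrow> rcomp k (\<lambda>e. pfst (a e))"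
  unfolding pfst_def by (rule rc_pfst)
lemma rc_psnd'[rci]: "rcomp k a \<Longrightarrow> rcomp k (\<lambda>e. psnd (a e))"
  unfolding psnd_def by (rule rc_psnd)

lemma pfst_pe[simp]: "pfst (prod_encode (a, b)) = a" by (simp add: pfst_def)
lemma psnd_pe[simp]: "psnd (prod_encode (a, b)) = b" by (simp add: psnd_def)

section \<open>List codes\<close>

definition lhd :: "nat \<Rightarrow> nat" where "lhd l = pfst (l - 1)"
definition ltl :: "nat \<Rightarrow> nat" where "ltl l = psnd (l - 1)"
definition ltln :: "nat \<Rightarrow> nat \<Rightarrow> nat" where "ltln l i = prec (\<lambda>_ y. ltl y) l i"
definition lnth :: "nat \<Rightarrow> nat \<Rightarrow> nat" where "lnth l i = lhd (ltln l i)"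
definition llen :: "nat \<Rightarrow> nat" where "llen l = bmin (Suc l) (\<lambda>i. ltln l i = 0)"
definition lcons :: "nat \<Rightarrow> nat \<Rightarrow> nat" where "lcons x l = Suc (prod_encode (x, l))"

lemma rc_lhd[rci]: "rcomp k a \<Longrightarrow> rcomp k (\<lambda>e. lhd (a e))"
  unfolding lhd_def by (intro rci)
lemma rc_ltl[rci]: "rcomp k a \<Longrightarrow> rcomp k (\<lambda>e. ltl (a e))"
  unfolding ltl_def by (intro rci)
lemma rc_ltln[rci]: "rcomp k a \<Longrightarrow> rcomp k b \<Longrightarrow> rcomp k (\<lambda>e. ltln (a e) (b e))"
  unfolding ltln_def by (intro rci; simp?)
lemma rc_lnth[rci]: "rcomp k a \<Longrightarrow> rcomp k b \<Longrightarrow> rcomp k (\<lambda>e. lnth (a e) (b e))"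
  unfolding lnth_def by (intro rci)
lemma rc_llen[rci]: "rcomp k a \<Longrightarrow> rcomp k (\<lambda>e. llen (a e))"
  by (rule rc_lift1[where F=llen]) (unfold llen_def, intro rci; simp?)
lemma rc_lcons[rci]: "rcomp k a \<Longrightarrow> rcomp k b \<Longrightarrow> rcomp k (\<lambda>e. lcons (a e) (b e))"
  unfolding lcons_def by (intro rci)

lemma lcons_le[simp]: "lcons x xs = list_encode (x # ys) \<longleftrightarrow> xs = list_encode ys"
  by (auto simp: lcons_def)

lemma lcons_enc: "lcons x (list_encode xs) = list_encode (x # xs)"
  by (simp add: lcons_def)

lemma ltl_enc[simp]: "ltl (Suc (prod_encode (x, l))) = l"
  by (simp add: ltl_def)
lemma lhd_enc[simp]: "lhd (Suc (prod_encode (x, l))) = x"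
  by (simp add: lhd_def)
lemma ltl_0[simp]: "ltl 0 = 0"
  by (simp add: ltl_def psnd_def prod_decode_def prod_decode_aux.simps)

lemma ltln_Suc: "ltln l (Suc i) = ltl (ltln l i)"
  by (simp add: ltln_def)
lemma ltln_0[simp]: "ltln l 0 = l"
  by (simp add: ltln_def)

lemma ltln_enc: "ltln (list_encode xs) i = list_encode (drop i xs)"
proof (induction i)
  case 0 then show ?case by simp
next
  case (Suc i)
  show ?case
  proof (cases "drop i xs")
    case Nil
    then have "drop (Suc i) xs = []" by (metis drop_Suc drop_Nil tl_drop)
    then show ?thesis using Suc Nil by (simp add: ltln_Suc)
  next
    case (Cons y ys)
    then have "drop (Suc i) xs = ys" by (metis drop_Suc list.sel(3) tl_drop)
    then show ?thesis using Suc Cons by (simp add: ltln_Suc)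
  qed
qed

lemma lnth_enc: "i < length xs \<Longrightarrow> lnth (list_encode xs) i = xs ! i"
  by (simp add: lnth_def ltln_enc Cons_nth_drop_Suc[symmetric])

lemma length_le_enc: "length xs \<le> list_encode xs"
proof (induction xs)
  case (Cons x xs)
  then show ?case using le_prod_encode_2[of "list_encode xs" x] by simp
qed simp

lemma mem_less_enc: "y \<in> set xs \<Longrightarrow> y < list_encode xs"
proof (induction xs)
  case (Cons x xs)
  then show ?case using le_prod_encode_2[of "list_encode xs" x] le_prod_encode_1[of x "list_encode xs"]
    by auto
qed simp

lemma list_encode_0_iff: "list_encode xs = 0 \<longleftrightarrow> xs = []"
  by (cases xs) auto

lemma llen_enc: "llen (list_encode xs) = length xs"
  unfolding llen_def
proof (rule bmin_eqI)
  show "length xs < Suc (list_encode xs)" using length_le_enc[of xs] by simp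
  show "ltln (list_encode xs) (length xs) = 0" by (simp add: ltln_enc)
  fix j assume "j < length xs"
  then show "ltln (list_encode xs) j \<noteq> 0" by (simp add: ltln_enc list_encode_0_iff)
qed

section \<open>Course-of-values recursion\<close>

fun hist :: "(nat \<Rightarrow> nat \<Rightarrow> nat) \<Rightarrow> nat \<Rightarrow> nat" where
  "hist G 0 = 0"
| "hist G (Suc m) = lcons (G m (hist G m)) (hist G m)"

definition cov :: "(nat \<Rightarrow> nat \<Rightarrow> nat) \<Rightarrow> nat \<Rightarrow> nat" where
  "cov G m = G m (hist G m)"

lemma hist_enc: "hist G m = list_encode (rev (map (cov G) [0..<m]))"
  by (induction m) (auto simp: lcons_enc cov_def)

lemma hist_look: "j < m \<Longrightarrow> lnth (hist G m) (m - Suc j) = cov G j"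
  by (simp add: hist_enc lnth_enc rev_nth)

lemma hist_prec: "hist G m = prec (\<lambda>m h. lcons (G m h) h) 0 m"
  by (induction m) auto

lemma rc_cov[rci]:
  assumes "rcomp (Suc (Suc k)) (\<lambda>e. G (\<lambda>i. e (Suc (Suc i))) (e 0) (e 1))" "rcomp k a"
  shows "rcomp k (\<lambda>e. cov (G e) (a e))"
proof -
  have "rcomp k (\<lambda>e. Let (a e) (\<lambda>m. Let (prec (\<lambda>m h. lcons (G e m h) h) 0 m) (\<lambda>h. G e m h)))"
  proof (intro rc_let rc_prec' assms(2) rc_const)
    show "rcomp (Suc (Suc k)) (\<lambda>e. G (\<lambda>i. e (Suc (Suc i))) (e (Suc 0)) (e 0))"
      using rc_reindex[OF assms(1), of "\<lambda>i. if i = 0 then 1 else if i = 1 then 0 else i" "Suc (Suc k)"]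
      by simp
    have "rcomp (Suc (Suc (Suc k))) (\<lambda>e. G (\<lambda>i. e (Suc (Suc (Suc i)))) (e 0) (e 1))"
      using rc_reindex[OF assms(1), of "\<lambda>i. if i < 2 then i else Suc i" "Suc (Suc (Suc k))"]
      by (simp add: numeral_eq_Suc)
    then show "rcomp (Suc (Suc (Suc k)))
     (\<lambda>e. lcons (G (\<lambda>i. e (Suc (Suc (Suc i)))) (e 0) (e 1)) (e 1))"
      by (intro rc_lcons rc_var) simp_all
    show "rcomp (Suc k) (\<lambda>e. e 0)" by (rule rc_var) simp
  qed
  then show ?thesis by (simp add: cov_def hist_prec Let_def)
qed

fun vars :: "form \<Rightarrow> nat set" where
  "vars (Var x) = {x}"
| "vars (App c args) = (\<Union>a\<in>set args. vars a)"

fun height :: "form \<Rightarrow> nat" where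
  "height (Var x) = 0"
| "height (App c args) = Suc (foldr (\<lambda>a m. max (height a) m) args 0)"

lemma height_arg: "a \<in> set args \<Longrightarrow> height a < height (App c args)"
proof -
  have "a \<in> set args \<Longrightarrow> height a \<le> foldr (\<lambda>a m. max (height a) m) args 0" for args
    by (induction args) auto
  then show "a \<in> set args \<Longrightarrow> height a < height (App c args)" by (simp add: le_imp_less_Suc)
qed

lemma height_App_le: "(\<And>a. a \<in> set args \<Longrightarrow> height a \<le> h) \<Longrightarrow> height (App c args) \<le> Suc h"
proof -
  have "(\<And>a. a \<in> set args \<Longrightarrow> height a \<le> h) \<Longrightarrow> foldr (\<lambda>a m. max (height a) m) args 0 \<le> h" for args
    by (induction args) auto
  then show "(\<And>a. a \<in> set args \<Longrightarrow> height a \<le> h) \<Longrightarrow> height (App c args) \<le> Suc h" by simp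
qed

definition good :: "lang \<Rightarrow> nat \<Rightarrow> form \<Rightarrow> bool" where
  "good ar N t \<longleftrightarrow> wf_form ar t \<and> vars t \<subseteq> {..<N}"

lemma val_cong: "(\<And>x. x \<in> vars t \<Longrightarrow> v x = v' x) \<Longrightarrow> val M v t = val M v' t"
proof (induction t)
  case (Var x) then show ?case by simp
next
  case (App c args)
  then have "map (val M v) args = map (val M v') args" by auto
  then show ?case by (metis val.simps(2))
qed

lemma val_subst: "val M v (subst \<sigma> t) = val M (\<lambda>x. val M v (\<sigma> x)) t"
proof (induction t)
  case (Var x) then show ?case by simp
next
  case (App c args)
  then have "map (val M v \<circ> subst \<sigma>) args = map (val M (\<lambda>x. val M v (\<sigma> x))) args" by auto
  then show ?case by (metis val.simps(2) subst.simps(2) map_map)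
qed

lemma subst_subst: "subst \<tau> (subst \<sigma> t) = subst (\<lambda>x. subst \<tau> (\<sigma> x)) t"
  by (induction t) auto

lemma subst_cong: "(\<And>x. x \<in> vars t \<Longrightarrow> \<sigma> x = \<tau> x) \<Longrightarrow> subst \<sigma> t = subst \<tau> t"
  by (induction t) auto

lemma vars_subst: "vars (subst \<sigma> t) = (\<Union>x\<in>vars t. vars (\<sigma> x))"
  by (induction t) auto

lemma wf_subst: "wf_form ar t \<Longrightarrow> (\<And>x. x \<in> vars t \<Longrightarrow> wf_form ar (\<sigma> x)) \<Longrightarrow> wf_form ar (subst \<sigma> t)"
  by (induction t) (auto simp: list_all_iff)

lemma foldl_tuple_bound:
  assumes "n > 0" "\<forall>v\<in>set vs. v < n"
  shows "foldl (\<lambda>acc v. acc * n + v) a vs < Suc a * n ^ length vs"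
  using assms(2)
proof (induction vs arbitrary: a)
  case Nil then show ?case by simp
next
  case (Cons v vs)
  then have "foldl (\<lambda>acc v. acc * n + v) (a * n + v) vs < Suc (a * n + v) * n ^ length vs" by simp
  also have "\<dots> \<le> (Suc a * n) * n ^ length vs"
    using Cons.prems by (intro mult_le_mono1) simp
  finally show ?case by (simp add: algebra_simps)
qed

lemma tuple_index_bound: "n > 0 \<Longrightarrow> \<forall>v\<in>set vs. v < n \<Longrightarrow> tuple_index n vs < n ^ length vs"
  using foldl_tuple_bound[of n vs 0] by (simp add: tuple_index_def)

lemma val_range:
  assumes "wf_logic ar M" "wf_form ar t" "\<And>x. x \<in> vars t \<Longrightarrow> v x < nvals M"
  shows "val M v t < nvals M"
  using assms(2,3)
proof (induction t)
  case (Var x) then show ?case by simp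
next
  case (App c args)
  have c: "c < length ar" "length args = ar ! c" and wa: "\<forall>a\<in>set args. wf_form ar a"
    using App.prems by (auto simp: list_all_iff)
  have lt: "\<forall>y\<in>set (map (val M v) args). y < nvals M"
    using App wa by auto
  have n0: "nvals M > 0" using lt c
  proof (cases args)
    case Nil
    have "length (tables M ! c) = nvals M ^ 0" using assms(1) c Nil unfolding wf_logic_def by auto
    then have "tables M ! c \<noteq> []" by auto
    then obtain y where "y \<in> set (tables M ! c)" by (cases "tables M ! c") auto
    then show ?thesis using assms(1) c unfolding wf_logic_def by fastforce
  next
    case (Cons a as)
    then show ?thesis using lt by auto
  qed
  have idx: "tuple_index (nvals M) (map (val M v) args) < length (tables M ! c)"
    using tuple_index_bound[OF n0 lt] assms(1) c unfolding wf_logic_def by auto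
  then have "tables M ! c ! tuple_index (nvals M) (map (val M v) args) \<in> set (tables M ! c)"
    by simp
  then show ?case using assms(1) c unfolding wf_logic_def by (auto simp: truth_fun_def)
qed


definition dig :: "nat \<Rightarrow> nat \<Rightarrow> nat \<Rightarrow> nat" where
  "dig n w x = w div n ^ x mod n"

definition encs :: "nat \<Rightarrow> (nat \<Rightarrow> nat) \<Rightarrow> nat \<Rightarrow> nat" where
  "encs n f N = (\<Sum>x<N. f x * n ^ x)"

lemma encs_bound: "(\<And>x. x < N \<Longrightarrow> f x < n) \<Longrightarrow> encs n f N < n ^ N"
proof (induction N)
  case 0 then show ?case by (simp add: encs_def)
next
  case (Suc N)
  have S: "encs n f N < n ^ N" using Suc by simp
  have fN: "f N + 1 \<le> n" using Suc.prems by fastforce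
  have "encs n f (Suc N) = encs n f N + f N * n ^ N" by (simp add: encs_def)
  also have "\<dots> < n ^ N + f N * n ^ N" using S by simp
  also have "\<dots> = (f N + 1) * n ^ N" by simp
  also have "\<dots> \<le> n * n ^ N" using fN by (rule mult_le_mono1)
  finally show ?case by simp
qed

lemma dig_encs: "(\<And>x. x < N \<Longrightarrow> f x < n) \<Longrightarrow> y < N \<Longrightarrow> dig n (encs n f N) y = f y"
proof (induction N)
  case 0 then show ?case by simp
next
  case (Suc N)
  have n0: "n > 0" using Suc.prems(1)[of y] Suc.prems(2) by simp
  have S: "encs n f N < n ^ N" using Suc.prems(1) by (intro encs_bound) simp
  have e: "encs n f (Suc N) = encs n f N + f N * n ^ N" by (simp add: encs_def)
  show ?case
  proof (cases "y < N")
    case True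
    obtain d where d: "N = y + Suc d" using True by (metis add_Suc_right less_imp_Suc_add)
    have "f N * n ^ N = n ^ y * (n * (f N * n ^ d))"
      unfolding d by (simp add: power_add algebra_simps)
    then have q: "encs n f (Suc N) = encs n f N + n ^ y * (n * (f N * n ^ d))"
      using e by simp
    have ny: "n ^ y \<noteq> 0" using n0 by simp
    have "encs n f (Suc N) div n ^ y = n * (f N * n ^ d) + encs n f N div n ^ y"
      unfolding q using div_mult_self2[OF ny] by blast
    then have "dig n (encs n f (Suc N)) y = (n * (f N * n ^ d) + encs n f N div n ^ y) mod n"
      by (simp only: dig_def)
    also have "\<dots> = encs n f N div n ^ y mod n" by (rule mod_mult_self4)
    also have "\<dots> = f y" using Suc True by (simp add: dig_def)
    finally show ?thesis .
  next
    case False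
    then have y: "y = N" using Suc.prems(2) by simp
    have nN: "n ^ N \<noteq> 0" using n0 by simp
    have "encs n f (Suc N) div n ^ N = f N + encs n f N div n ^ N"
      unfolding e using div_mult_self1[OF nN] by blast
    also have "\<dots> = f N" using S by simp
    finally show ?thesis using y Suc.prems(1)[of N] by (simp add: dig_def)
  qed
qed

lemma dig_less: "n > 0 \<Longrightarrow> dig n w x < n"
  by (simp add: dig_def)

lemma taut_digits:
  assumes "nvals M > 0" "vars A \<subseteq> {..<N}"
  shows "tautology M A \<longleftrightarrow> (\<forall>w<nvals M ^ N. val M (dig (nvals M) w) A \<in> designated M)"
proof
  assume "tautology M A"
  then show "\<forall>w<nvals M ^ N. val M (dig (nvals M) w) A \<in> designated M"
    using dig_less[OF assms(1)] unfolding tautology_def by blast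
next
  assume H: "\<forall>w<nvals M ^ N. val M (dig (nvals M) w) A \<in> designated M"
  show "tautology M A" unfolding tautology_def
  proof (intro allI impI)
    fix v :: "nat \<Rightarrow> nat" assume v: "\<forall>x. v x < nvals M"
    let ?w = "encs (nvals M) v N"
    have "?w < nvals M ^ N" using v by (intro encs_bound) auto
    then have "val M (dig (nvals M) ?w) A \<in> designated M" using H by blast
    moreover have "val M (dig (nvals M) ?w) A = val M v A"
    proof (rule val_cong)
      fix x assume "x \<in> vars A"
      then have "x < N" using assms(2) by auto
      have vN: "\<And>y. y < N \<Longrightarrow> v y < nvals M" using v by blast
      show "dig (nvals M) ?w x = v x" by (rule dig_encs[of N v "nvals M" x, OF vN \<open>x < N\<close>])
    qed
    ultimately show "val M v A \<in> designated M" by simp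
  qed
qed

section \<open>Term functions and height reduction\<close>

definition tf :: "logic \<Rightarrow> form \<Rightarrow> nat \<Rightarrow> nat" where
  "tf M t = restrict (\<lambda>w. val M (dig (nvals M) w) t) {..<nvals M ^ nvals M}"

definition Fh :: "lang \<Rightarrow> logic \<Rightarrow> nat \<Rightarrow> (nat \<Rightarrow> nat) set" where
  "Fh ar M h = tf M ` {t. good ar (nvals M) t \<and> height t \<le> h}"

lemma tf_App:
  assumes "map (tf M) args = map (tf M) args'"
  shows "tf M (App c args) = tf M (App c args')"
proof (rule ext)
  fix w
  show "tf M (App c args) w = tf M (App c args') w"
  proof (cases "w < nvals M ^ nvals M")
    case True
    have "map (val M (dig (nvals M) w)) args = map (\<lambda>a. tf M a w) args"
      using True by (simp add: tf_def)
    also have "\<dots> = map (\<lambda>f. f w) (map (tf M) args)" by simp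
    also have "\<dots> = map (\<lambda>f. f w) (map (tf M) args')" by (simp only: assms)
    also have "\<dots> = map (\<lambda>a. tf M a w) args'" by simp
    also have "\<dots> = map (val M (dig (nvals M) w)) args'"
      using True by (simp add: tf_def)
    finally show ?thesis using True by (simp add: tf_def)
  qed (simp add: tf_def)
qed

lemma Fh_mono: "h \<le> h' \<Longrightarrow> Fh ar M h \<subseteq> Fh ar M h'"
  unfolding Fh_def by auto

lemma good_App: "good ar N (App c args) \<longleftrightarrow> c < length ar \<and> length args = ar ! c \<and> (\<forall>a\<in>set args. good ar N a)"
  unfolding good_def by (auto simp: list_all_iff)

lemma Fh_step:
  assumes "Fh ar M h = Fh ar M (Suc h)"
  shows "Fh ar M (Suc (Suc h)) = Fh ar M (Suc h)"
proof
  show "Fh ar M (Suc h) \<subseteq> Fh ar M (Suc (Suc h))" by (rule Fh_mono) simp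
next
  show "Fh ar M (Suc (Suc h)) \<subseteq> Fh ar M (Suc h)"
  proof
    fix f assume "f \<in> Fh ar M (Suc (Suc h))"
    then obtain t where t: "good ar (nvals M) t" "height t \<le> Suc (Suc h)" "f = tf M t"
      unfolding Fh_def by auto
    show "f \<in> Fh ar M (Suc h)"
    proof (cases t)
      case (Var x)
      then show ?thesis using t unfolding Fh_def by auto
    next
      case (App c args)
      have ex: "\<exists>a'. good ar (nvals M) a' \<and> height a' \<le> h \<and> tf M a' = tf M a" if a: "a \<in> set args" for a
      proof -
        have "good ar (nvals M) a" using t(1) a App good_App by auto
        moreover have "height a \<le> Suc h" using height_arg[OF a, of c] t(2) App by simp
        ultimately have "tf M a \<in> Fh ar M (Suc h)" unfolding Fh_def by auto
        then have "tf M a \<in> Fh ar M h" using assms by simp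
        then show ?thesis unfolding Fh_def by auto
      qed
      define pick where "pick a = (SOME a'. good ar (nvals M) a' \<and> height a' \<le> h \<and> tf M a' = tf M a)" for a
      have Qp: "good ar (nvals M) (pick a) \<and> height (pick a) \<le> h \<and> tf M (pick a) = tf M a"
        if "a \<in> set args" for a
        unfolding pick_def by (rule someI_ex[OF ex[OF that]])
      define args' where "args' = map pick args"
      have P: "good ar (nvals M) a' \<and> height a' \<le> h" if "a' \<in> set args'" for a'
      proof -
        obtain a where "a \<in> set args" "a' = pick a" using \<open>a' \<in> set args'\<close> unfolding args'_def by auto
        then show ?thesis using Qp by blast
      qed
      have m: "map (tf M) args' = map (tf M) args"
        unfolding args'_def map_map by (rule map_cong) (use Qp in auto)
      have g: "good ar (nvals M) (App c args')"
      proof -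
        have "good ar (nvals M) (App c args)" using t(1) App by simp
        then show ?thesis using P unfolding good_App by (simp add: args'_def)
      qed
      have hh: "height (App c args') \<le> Suc h"
        by (rule height_App_le) (use P in auto)
      have "tf M (App c args') = f" using tf_App[OF m] t(3) App by simp
      then show ?thesis using g hh unfolding Fh_def by blast
    qed
  qed
qed

lemma Fh_stable1:
  assumes "Fh ar M h = Fh ar M (Suc h)"
  shows "Fh ar M (h + m) = Fh ar M (Suc (h + m))"
proof (induction m)
  case 0 then show ?case using assms by simp
next
  case (Suc m)
  then show ?case using Fh_step[of ar M "h + m"] by simp
qed

lemma Fh_stable:
  assumes "Fh ar M h = Fh ar M (Suc h)"
  shows "Fh ar M (h + m) = Fh ar M h"
proof (induction m)
  case 0 then show ?case by simp
next
  case (Suc m)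
  then show ?case using Fh_stable1[OF assms, of m] by simp
qed


section \<open>Pigeonhole\<close>

abbreviation FS :: "nat \<Rightarrow> (nat \<Rightarrow> nat) set" where
  "FS n \<equiv> PiE {..<n ^ n} (\<lambda>_. {..<n})"

lemma tf_in:
  assumes "wf_logic ar M" "nvals M > 0" "good ar (nvals M) t"
  shows "tf M t \<in> FS (nvals M)"
proof -
  have "val M (dig (nvals M) w) t < nvals M" for w
    by (rule val_range[OF assms(1)]) (use assms(2,3) dig_less in \<open>auto simp: good_def\<close>)
  then show ?thesis unfolding tf_def by auto
qed

lemma Fh_sub: "wf_logic ar M \<Longrightarrow> nvals M > 0 \<Longrightarrow> Fh ar M h \<subseteq> FS (nvals M)"
  unfolding Fh_def using tf_in by blast

lemma FS_finite: "finite (FS n)"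
  by (rule finite_PiE) auto

lemma FS_card: "card (FS n) = n ^ (n ^ n)"
  by (simp add: card_PiE)

lemma Fh_grow:
  assumes "wf_logic ar M" "nvals M > 0" "\<forall>h<m. Fh ar M h \<noteq> Fh ar M (Suc h)"
  shows "m \<le> card (Fh ar M m)"
  using assms(3)
proof (induction m)
  case 0 then show ?case by simp
next
  case (Suc m)
  have "Fh ar M m \<subset> Fh ar M (Suc m)" using Fh_mono[of m "Suc m" ar M] Suc.prems by auto
  moreover have "finite (Fh ar M (Suc m))"
    using Fh_sub[OF assms(1,2)] FS_finite by (rule finite_subset)
  ultimately have "card (Fh ar M m) < card (Fh ar M (Suc m))" by (rule psubset_card_mono[rotated])
  then show ?case using Suc by simp
qed

lemma exists_stable:
  assumes "wf_logic ar M" "nvals M > 0"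
  shows "\<exists>h\<le>nvals M ^ (nvals M ^ nvals M). Fh ar M h = Fh ar M (Suc h)"
proof (rule ccontr)
  let ?K = "nvals M ^ (nvals M ^ nvals M)"
  assume "\<not> ?thesis"
  then have "\<forall>h<Suc ?K. Fh ar M h \<noteq> Fh ar M (Suc h)" by auto
  then have "Suc ?K \<le> card (Fh ar M (Suc ?K))" by (rule Fh_grow[OF assms])
  also have "\<dots> \<le> card (FS (nvals M))" by (rule card_mono[OF FS_finite Fh_sub[OF assms]])
  also have "\<dots> = ?K" by (rule FS_card)
  finally show False by simp
qed

lemma height_reduce:
  assumes "wf_logic ar M" "nvals M > 0" "good ar (nvals M) t"
  shows "\<exists>t'. good ar (nvals M) t' \<and> height t' \<le> nvals M ^ (nvals M ^ nvals M) \<and> tf M t' = tf M t"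
proof -
  let ?K = "nvals M ^ (nvals M ^ nvals M)"
  obtain h where h: "h \<le> ?K" "Fh ar M h = Fh ar M (Suc h)" using exists_stable[OF assms(1,2)] by blast
  have "tf M t \<in> Fh ar M (h + height t)" unfolding Fh_def using assms(3) by auto
  then have "tf M t \<in> Fh ar M h" using Fh_stable[OF h(2)] by simp
  then have "tf M t \<in> Fh ar M ?K" using Fh_mono[OF h(1)] by blast
  then show ?thesis unfolding Fh_def by auto
qed

lemma tf_eq_val:
  assumes "good ar (nvals M) t" "good ar (nvals M) t'" "tf M t = tf M t'" "\<And>y. v y < nvals M"
  shows "val M v t = val M v t'"
proof -
  let ?n = "nvals M"
  let ?w = "encs ?n v ?n"
  have w: "?w < ?n ^ ?n" using assms(4) by (intro encs_bound) auto
  have vN: "\<And>y. y < ?n \<Longrightarrow> v y < ?n" using assms(4) by blast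
  have d: "dig ?n ?w x = v x" if "x < ?n" for x by (rule dig_encs[OF vN that])
  have 1: "val M v u = val M (dig ?n ?w) u" if "good ar ?n u" for u
  proof (rule val_cong)
    fix x assume "x \<in> vars u"
    then have "x < ?n" using that by (auto simp: good_def)
    then show "v x = dig ?n ?w x" using d by simp
  qed
  have "val M (dig ?n ?w) t = tf M t ?w" using w by (simp add: tf_def)
  also have "\<dots> = tf M t' ?w" using assms(3) by simp
  also have "\<dots> = val M (dig ?n ?w) t'" using w by (simp add: tf_def)
  finally show ?thesis using 1[OF assms(1)] 1[OF assms(2)] by simp
qed


section \<open>Reduction of counterexamples\<close>

definition sig_ts :: "form list \<Rightarrow> nat \<Rightarrow> form" where
  "sig_ts ts x = (if x < length ts then ts ! x else Var 0)"

lemma taut_inst: "tautology M A \<Longrightarrow> \<forall>x. v x < nvals M \<Longrightarrow> val M v A \<in> designated M"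
  unfolding tautology_def by blast

lemma taut_varsubst:
  assumes "tautology M A" "\<And>x. \<rho> x = Var (r x)"
  shows "tautology M (subst \<rho> A)"
  unfolding tautology_def
proof (intro allI impI)
  fix v :: "nat \<Rightarrow> nat" assume v: "\<forall>x. v x < nvals M"
  have "val M v (subst \<rho> A) = val M (\<lambda>x. v (r x)) A" by (simp add: val_subst assms(2))
  moreover have "\<forall>x. v (r x) < nvals M" using v by simp
  then have "val M (\<lambda>x. v (r x)) A \<in> designated M"
    using assms(1)[unfolded tautology_def, THEN spec[of _ "\<lambda>x. v (r x)"]] by simp
  ultimately show "val M v (subst \<rho> A) \<in> designated M" by simp
qed

lemma reduce_vars:
  assumes "nvals M > 0" "\<forall>x. wf_form ar (\<sigma> x)"
    "\<forall>p\<in>set ps. tautology M (subst \<sigma> p)" "\<not> tautology M (subst \<sigma> c)"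
  shows "\<exists>\<sigma>1. (\<forall>x. good ar (nvals M) (\<sigma>1 x)) \<and>
    (\<forall>p\<in>set ps. tautology M (subst \<sigma>1 p)) \<and> \<not> tautology M (subst \<sigma>1 c)"
proof -
  let ?n = "nvals M"
  obtain v0 where v0: "\<forall>x. v0 x < ?n" "val M v0 (subst \<sigma> c) \<notin> designated M"
    using assms(4) unfolding tautology_def by blast
  let ?\<rho> = "\<lambda>y. Var (v0 y)"
  define \<sigma>1 where "\<sigma>1 x = subst ?\<rho> (\<sigma> x)" for x
  have g: "good ar ?n (\<sigma>1 x)" for x
  proof -
    have "wf_form ar (subst ?\<rho> (\<sigma> x))"
      by (rule wf_subst) (use assms(2) in simp_all)
    moreover have "vars (subst ?\<rho> (\<sigma> x)) \<subseteq> {..<?n}"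
      unfolding vars_subst using v0(1) by auto
    ultimately show ?thesis unfolding good_def \<sigma>1_def by simp
  qed
  have p: "tautology M (subst \<sigma>1 p)" if "p \<in> set ps" for p
  proof -
    have "subst \<sigma>1 p = subst ?\<rho> (subst \<sigma> p)" unfolding \<sigma>1_def by (simp add: subst_subst)
    then show ?thesis using taut_varsubst[of M "subst \<sigma> p" ?\<rho> v0] assms(3) that by simp
  qed
  let ?v' = "\<lambda>y. y mod ?n"
  have "val M ?v' (\<sigma>1 x) = val M v0 (\<sigma> x)" for x
  proof -
    have "(\<lambda>y. v0 y mod ?n) = v0" using v0(1) by (simp add: fun_eq_iff)
    then show ?thesis unfolding \<sigma>1_def by (simp add: val_subst)
  qed
  then have "val M ?v' (subst \<sigma>1 c) = val M v0 (subst \<sigma> c)" by (simp add: val_subst)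
  moreover have "\<forall>y. ?v' y < ?n" using assms(1) by simp
  ultimately have nt: "\<not> tautology M (subst \<sigma>1 c)"
  proof (intro notI)
    assume e: "val M ?v' (subst \<sigma>1 c) = val M v0 (subst \<sigma> c)" and l: "\<forall>y. ?v' y < ?n"
      and "tautology M (subst \<sigma>1 c)"
    have "val M ?v' (subst \<sigma>1 c) \<in> designated M"
      by (rule taut_inst[OF \<open>tautology M (subst \<sigma>1 c)\<close> l])
    then show False using e v0(2) by simp
  qed
  show ?thesis by (rule exI[of _ \<sigma>1]) (use g p nt in simp)
qed

lemma val_subst_eq:
  assumes "\<And>x. val M v (\<sigma> x) = val M v (\<tau> x)"
  shows "val M v (subst \<sigma> A) = val M v (subst \<tau> A)"
  using assms by (simp add: val_subst)

lemma reduce_height: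
  assumes "wf_logic ar M" "nvals M > 0" "\<forall>x. good ar (nvals M) (\<sigma>1 x)"
    "\<forall>p\<in>set ps. tautology M (subst \<sigma>1 p)" "\<not> tautology M (subst \<sigma>1 c)"
  shows "\<exists>\<sigma>2. (\<forall>x. good ar (nvals M) (\<sigma>2 x) \<and> height (\<sigma>2 x) \<le> nvals M ^ (nvals M ^ nvals M)) \<and>
    (\<forall>p\<in>set ps. tautology M (subst \<sigma>2 p)) \<and> \<not> tautology M (subst \<sigma>2 c)"
proof -
  let ?n = "nvals M"
  let ?K = "?n ^ (?n ^ ?n)"
  define \<sigma>2 where "\<sigma>2 x = (SOME t'. good ar ?n t' \<and> height t' \<le> ?K \<and> tf M t' = tf M (\<sigma>1 x))" for x
  have P: "good ar ?n (\<sigma>2 x) \<and> height (\<sigma>2 x) \<le> ?K \<and> tf M (\<sigma>2 x) = tf M (\<sigma>1 x)" for x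
    unfolding \<sigma>2_def by (rule someI_ex[OF height_reduce[OF assms(1,2) assms(3)[rule_format]]])
  have eq: "val M v (subst \<sigma>2 A) = val M v (subst \<sigma>1 A)" if "\<forall>y. v y < ?n" for v A
  proof (rule val_subst_eq)
    fix x show "val M v (\<sigma>2 x) = val M v (\<sigma>1 x)"
      by (rule tf_eq_val[of ar M]) (use P assms(3) that in auto)
  qed
  have teq: "tautology M (subst \<sigma>2 A) \<longleftrightarrow> tautology M (subst \<sigma>1 A)" for A
    unfolding tautology_def using eq by auto
  show ?thesis by (rule exI[of _ \<sigma>2]) (use P assms(4,5) teq in simp)
qed

lemma sig_ts_wf: "\<forall>t\<in>set ts. wf_form ar t \<Longrightarrow> wf_form ar (sig_ts ts x)"
  unfolding sig_ts_def by auto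

lemma rule_ok_iff:
  assumes "wf_logic ar M" "nvals M > 0" "\<forall>p\<in>set ps. vars p \<subseteq> {..<V}" "vars c \<subseteq> {..<V}"
  shows "(\<forall>\<sigma>. (\<forall>x. wf_form ar (\<sigma> x)) \<longrightarrow> (\<forall>A\<in>set ps. tautology M (subst \<sigma> A)) \<longrightarrow> tautology M (subst \<sigma> c))
    \<longleftrightarrow> (\<forall>ts. length ts = V \<longrightarrow> (\<forall>t\<in>set ts. good ar (nvals M) t \<and> height t \<le> nvals M ^ (nvals M ^ nvals M)) \<longrightarrow>
          (\<forall>A\<in>set ps. tautology M (subst (sig_ts ts) A)) \<longrightarrow> tautology M (subst (sig_ts ts) c))"
  (is "?L \<longleftrightarrow> ?R")
proof
  assume L: ?L
  show ?R
  proof (intro allI impI)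
    fix ts assume "length ts = V" "\<forall>t\<in>set ts. good ar (nvals M) t \<and> height t \<le> nvals M ^ (nvals M ^ nvals M)"
      "\<forall>A\<in>set ps. tautology M (subst (sig_ts ts) A)"
    then have "\<forall>x. wf_form ar (sig_ts ts x)" using sig_ts_wf[of ts ar] by (auto simp: good_def)
    then show "tautology M (subst (sig_ts ts) c)"
      using L[rule_format, of "sig_ts ts"] \<open>\<forall>A\<in>set ps. tautology M (subst (sig_ts ts) A)\<close> by simp
  qed
next
  assume R: ?R
  show ?L
  proof (rule ccontr)
    assume "\<not> ?L"
    then obtain \<sigma> where s: "\<forall>x. wf_form ar (\<sigma> x)" "\<forall>A\<in>set ps. tautology M (subst \<sigma> A)"
      "\<not> tautology M (subst \<sigma> c)" by blast
    obtain \<sigma>1 where s1: "\<forall>x. good ar (nvals M) (\<sigma>1 x)" "\<forall>p\<in>set ps. tautology M (subst \<sigma>1 p)"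
      "\<not> tautology M (subst \<sigma>1 c)" using reduce_vars[OF assms(2) s] by blast
    obtain \<sigma>2 where s2: "\<forall>x. good ar (nvals M) (\<sigma>2 x) \<and> height (\<sigma>2 x) \<le> nvals M ^ (nvals M ^ nvals M)"
      "\<forall>p\<in>set ps. tautology M (subst \<sigma>2 p)" "\<not> tautology M (subst \<sigma>2 c)"
      using reduce_height[OF assms(1,2) s1] by blast
    let ?ts = "map \<sigma>2 [0..<V]"
    have st: "subst (sig_ts ?ts) A = subst \<sigma>2 A" if "vars A \<subseteq> {..<V}" for A
      by (rule subst_cong) (use that in \<open>auto simp: sig_ts_def\<close>)
    have "length ?ts = V" by simp
    moreover have "\<forall>t\<in>set ?ts. good ar (nvals M) t \<and> height t \<le> nvals M ^ (nvals M ^ nvals M)"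
      using s2(1) by auto
    moreover have "\<forall>A\<in>set ps. tautology M (subst (sig_ts ?ts) A)"
      using s2(2) st assms(3) by auto
    moreover have "length ?ts = V \<longrightarrow> (\<forall>t\<in>set ?ts. good ar (nvals M) t \<and> height t \<le> nvals M ^ (nvals M ^ nvals M)) \<longrightarrow>
          (\<forall>A\<in>set ps. tautology M (subst (sig_ts ?ts) A)) \<longrightarrow> tautology M (subst (sig_ts ?ts) c)"
      using R by (rule spec)
    ultimately have "tautology M (subst (sig_ts ?ts) c)" by blast
    then show False using s2(3) st[OF assms(4)] by simp
  qed
qed


fun lb :: "nat \<Rightarrow> nat \<Rightarrow> nat" where
  "lb 0 b = 0"
| "lb (Suc A) b = Suc (prod_encode (b, lb A b))"

fun cbnd :: "nat \<Rightarrow> nat \<Rightarrow> nat \<Rightarrow> nat" where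
  "cbnd Ac n 0 = prod_encode (0, n)"
| "cbnd Ac n (Suc h) = max (cbnd Ac n h) (prod_encode (Ac, lb Ac (cbnd Ac n h)))"

lemma triangle_mono: "x \<le> y \<Longrightarrow> triangle x \<le> triangle y"
  unfolding triangle_def by (intro div_le_mono mult_le_mono) simp_all

lemma pe_mono: "a \<le> a' \<Longrightarrow> b \<le> b' \<Longrightarrow> prod_encode (a, b) \<le> prod_encode (a', b')"
  unfolding prod_encode_def using triangle_mono[of "a + b" "a' + b'"] by simp

lemma lb_bound: "length xs \<le> A \<Longrightarrow> (\<forall>y\<in>set xs. y \<le> b) \<Longrightarrow> list_encode xs \<le> lb A b"
proof (induction xs arbitrary: A)
  case Nil then show ?case by simp
next
  case (Cons x xs)
  then obtain A' where A: "A = Suc A'" by (cases A) auto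
  have "list_encode xs \<le> lb A' b" using Cons A by simp
  then have "prod_encode (x, list_encode xs) \<le> prod_encode (b, lb A' b)"
    using Cons.prems(2) by (intro pe_mono) simp_all
  then show ?case using A by simp
qed

lemma cbnd_mono: "h \<le> h' \<Longrightarrow> cbnd Ac n h \<le> cbnd Ac n h'"
  by (rule lift_Suc_mono_le[of "cbnd Ac n"]) simp_all

lemma code_bound:
  assumes "good ar n t" "height t \<le> h" "length ar \<le> Ac" "\<forall>a\<in>set ar. a \<le> Ac"
  shows "form_code t \<le> cbnd Ac n h"
  using assms(1,2)
proof (induction t arbitrary: h)
  case (Var x)
  then have "x \<le> n" by (auto simp: good_def)
  then have "form_code (Var x) \<le> cbnd Ac n 0" by (simp add: pe_mono)
  also have "\<dots> \<le> cbnd Ac n h" by (rule cbnd_mono) simp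
  finally show ?case .
next
  case (App c args)
  obtain h' where h: "h = Suc h'" using App.prems(2) by (cases h) auto
  have g: "c < length ar" "length args = ar ! c" "\<forall>a\<in>set args. good ar n a"
    using App.prems(1) good_App by auto
  have ih: "form_code a \<le> cbnd Ac n h'" if "a \<in> set args" for a
  proof (rule App.IH[OF that])
    show "good ar n a" using g that by blast
    show "height a \<le> h'" using height_arg[OF that, of c] App.prems(2) h by simp
  qed
  have "length (map form_code args) \<le> Ac" using g assms(4) by simp
  then have "list_encode (map form_code args) \<le> lb Ac (cbnd Ac n h')"
    by (rule lb_bound) (use ih in auto)
  moreover have "Suc c \<le> Ac" using g(1) assms(3) by simp
  ultimately have "form_code (App c args) \<le> prod_encode (Ac, lb Ac (cbnd Ac n h'))"
    by (simp add: pe_mono)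
  then show ?case using h by simp
qed

section \<open>Semantic characterisation\<close>

lemma taut_subst_digits:
  assumes "wf_logic ar M" "nvals M > 0" "length ts = V" "\<forall>t\<in>set ts. good ar (nvals M) t"
    "vars A \<subseteq> {..<V}"
  shows "tautology M (subst (sig_ts ts) A) \<longleftrightarrow>
    (\<forall>w<nvals M ^ nvals M. val M (dig (nvals M) (encs (nvals M) (\<lambda>x. val M (dig (nvals M) w) (ts ! x)) V)) A \<in> designated M)"
proof -
  let ?n = "nvals M"
  have gx: "good ar ?n (ts ! x)" if "x < V" for x using assms(3,4) that by simp
  have vs: "vars (subst (sig_ts ts) A) \<subseteq> {..<?n}"
  proof
    fix y assume "y \<in> vars (subst (sig_ts ts) A)"
    then obtain x where x: "x \<in> vars A" "y \<in> vars (sig_ts ts x)" unfolding vars_subst by blast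
    then have "x < V" using assms(5) by auto
    then have "sig_ts ts x = ts ! x" "good ar ?n (ts ! x)" using gx assms(3) by (auto simp: sig_ts_def)
    then show "y \<in> {..<?n}" using x(2) by (auto simp: good_def)
  qed
  have eq: "val M (dig ?n w) (subst (sig_ts ts) A) =
      val M (dig ?n (encs ?n (\<lambda>x. val M (dig ?n w) (ts ! x)) V)) A" for w
  proof -
    have fl: "val M (dig ?n w) (ts ! x) < ?n" if "x < V" for x
      by (rule val_range[OF assms(1)]) (use gx[OF that] dig_less[OF assms(2)] in \<open>auto simp: good_def\<close>)
    have "val M (dig ?n w) (subst (sig_ts ts) A) = val M (\<lambda>x. val M (dig ?n w) (sig_ts ts x)) A"
      by (rule val_subst)
    also have "\<dots> = val M (dig ?n (encs ?n (\<lambda>x. val M (dig ?n w) (ts ! x)) V)) A"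
    proof (rule val_cong)
      fix x assume "x \<in> vars A"
      then have x: "x < V" using assms(5) by auto
      show "val M (dig ?n w) (sig_ts ts x) = dig ?n (encs ?n (\<lambda>x. val M (dig ?n w) (ts ! x)) V) x"
        using dig_encs[of V "\<lambda>x. val M (dig ?n w) (ts ! x)" ?n x, OF fl x] x assms(3)
        by (simp add: sig_ts_def)
    qed
    finally show ?thesis .
  qed
  show ?thesis unfolding taut_digits[OF assms(2) vs] eq ..
qed

definition envs :: "logic \<Rightarrow> nat \<Rightarrow> form list \<Rightarrow> nat \<Rightarrow> nat" where
  "envs M V ts w = encs (nvals M) (\<lambda>x. val M (dig (nvals M) w) (ts ! x)) V"

definition dtaut :: "logic \<Rightarrow> nat \<Rightarrow> form list \<Rightarrow> form \<Rightarrow> bool" where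
  "dtaut M V ts A \<longleftrightarrow> (\<forall>w<nvals M ^ nvals M. val M (dig (nvals M) (envs M V ts w)) A \<in> designated M)"

lemma t_sound_char:
  assumes "wf_calc ar C" "wf_logic ar M" "nvals M > 0"
    "\<forall>A\<in>set (fst C). vars A \<subseteq> {..<V}"
    "\<forall>(ps, c)\<in>set (snd C). (\<forall>p\<in>set ps. vars p \<subseteq> {..<V}) \<and> vars c \<subseteq> {..<V}"
    "\<And>t. good ar (nvals M) t \<Longrightarrow> height t \<le> nvals M ^ (nvals M ^ nvals M) \<Longrightarrow> form_code t < B"
  shows "t_sound ar C M \<longleftrightarrow>
    (\<forall>A\<in>set (fst C). \<forall>w<nvals M ^ V. val M (dig (nvals M) w) A \<in> designated M) \<and>
    (\<forall>(ps, c)\<in>set (snd C). \<forall>ts. length ts = V \<longrightarrow> (\<forall>t\<in>set ts. good ar (nvals M) t \<and> form_code t < B) \<longrightarrow>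
        (\<forall>A\<in>set ps. dtaut M V ts A) \<longrightarrow> dtaut M V ts c)"
proof -
  let ?n = "nvals M"
  let ?K = "?n ^ (?n ^ ?n)"
  have ax: "(\<forall>A\<in>set (fst C). tautology M A) \<longleftrightarrow>
      (\<forall>A\<in>set (fst C). \<forall>w<nvals M ^ V. val M (dig (nvals M) w) A \<in> designated M)"
    using taut_digits[OF assms(3)] assms(4) by blast
  have rl: "(\<forall>\<sigma>. (\<forall>x. wf_form ar (\<sigma> x)) \<longrightarrow> (\<forall>A\<in>set ps. tautology M (subst \<sigma> A)) \<longrightarrow> tautology M (subst \<sigma> c))
      \<longleftrightarrow> (\<forall>ts. length ts = V \<longrightarrow> (\<forall>t\<in>set ts. good ar ?n t \<and> form_code t < B) \<longrightarrow>
        (\<forall>A\<in>set ps. dtaut M V ts A) \<longrightarrow> dtaut M V ts c)"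
    if r: "(ps, c) \<in> set (snd C)" for ps c
  proof -
    have vpc: "(\<forall>p\<in>set ps. vars p \<subseteq> {..<V}) \<and> vars c \<subseteq> {..<V}" using bspec[OF assms(5) r] by simp
    then have vp: "\<forall>p\<in>set ps. vars p \<subseteq> {..<V}" and vc: "vars c \<subseteq> {..<V}" by auto
    have dt: "tautology M (subst (sig_ts ts) A) \<longleftrightarrow> dtaut M V ts A"
      if "length ts = V" "\<forall>t\<in>set ts. good ar ?n t" "vars A \<subseteq> {..<V}" for ts A
      unfolding dtaut_def envs_def by (rule taut_subst_digits[OF assms(2,3) that])
    let ?L = "\<forall>\<sigma>. (\<forall>x. wf_form ar (\<sigma> x)) \<longrightarrow> (\<forall>A\<in>set ps. tautology M (subst \<sigma> A)) \<longrightarrow> tautology M (subst \<sigma> c)"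
    let ?H = "\<forall>ts. length ts = V \<longrightarrow> (\<forall>t\<in>set ts. good ar ?n t \<and> height t \<le> ?K) \<longrightarrow>
          (\<forall>A\<in>set ps. tautology M (subst (sig_ts ts) A)) \<longrightarrow> tautology M (subst (sig_ts ts) c)"
    let ?B = "\<forall>ts. length ts = V \<longrightarrow> (\<forall>t\<in>set ts. good ar ?n t \<and> form_code t < B) \<longrightarrow>
          (\<forall>A\<in>set ps. tautology M (subst (sig_ts ts) A)) \<longrightarrow> tautology M (subst (sig_ts ts) c)"
    have LH: "?L \<longleftrightarrow> ?H" by (rule rule_ok_iff[OF assms(2,3) vp vc])
    have LB: "?L \<Longrightarrow> ?B"
    proof (intro allI impI)
      fix ts assume L: ?L and "length ts = V" and g: "\<forall>t\<in>set ts. good ar ?n t \<and> form_code t < B"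
        and p: "\<forall>A\<in>set ps. tautology M (subst (sig_ts ts) A)"
      have "\<forall>x. wf_form ar (sig_ts ts x)" using sig_ts_wf[of ts ar] g by (auto simp: good_def)
      then show "tautology M (subst (sig_ts ts) c)" using L[rule_format, of "sig_ts ts"] p by simp
    qed
    have BH: "?B \<Longrightarrow> ?H"
    proof (intro allI impI)
      fix ts assume Bh: ?B and l: "length ts = V" and g: "\<forall>t\<in>set ts. good ar ?n t \<and> height t \<le> ?K"
        and p: "\<forall>A\<in>set ps. tautology M (subst (sig_ts ts) A)"
      have g2: "\<forall>t\<in>set ts. good ar ?n t \<and> form_code t < B" using g assms(6) by blast
      have "length ts = V \<longrightarrow> (\<forall>t\<in>set ts. good ar ?n t \<and> form_code t < B) \<longrightarrow>
          (\<forall>A\<in>set ps. tautology M (subst (sig_ts ts) A)) \<longrightarrow> tautology M (subst (sig_ts ts) c)"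
        using Bh by (rule spec)
      then show "tautology M (subst (sig_ts ts) c)" using l g2 p by blast
    qed
    have LB': "?L \<longleftrightarrow> ?B" using LH LB BH by blast
    have BD: "?B \<longleftrightarrow> (\<forall>ts. length ts = V \<longrightarrow> (\<forall>t\<in>set ts. good ar ?n t \<and> form_code t < B) \<longrightarrow>
        (\<forall>A\<in>set ps. dtaut M V ts A) \<longrightarrow> dtaut M V ts c)"
    proof -
      have pw: "(length ts = V \<longrightarrow> (\<forall>t\<in>set ts. good ar ?n t \<and> form_code t < B) \<longrightarrow>
          (\<forall>A\<in>set ps. tautology M (subst (sig_ts ts) A)) \<longrightarrow> tautology M (subst (sig_ts ts) c)) \<longleftrightarrow>
          (length ts = V \<longrightarrow> (\<forall>t\<in>set ts. good ar ?n t \<and> form_code t < B) \<longrightarrow>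
          (\<forall>A\<in>set ps. dtaut M V ts A) \<longrightarrow> dtaut M V ts c)" for ts
      proof (cases "length ts = V \<and> (\<forall>t\<in>set ts. good ar ?n t \<and> form_code t < B)")
        case True
        then have "length ts = V" "\<forall>t\<in>set ts. good ar ?n t" by auto
        then show ?thesis using dt vp vc True by simp
      qed auto
      show ?thesis by (simp only: pw)
    qed
    show ?thesis using LB' BD by simp
  qed
  have rls: "(\<forall>(ps, c)\<in>set (snd C). \<forall>\<sigma>. (\<forall>x. wf_form ar (\<sigma> x)) \<longrightarrow>
        (\<forall>A\<in>set ps. tautology M (subst \<sigma> A)) \<longrightarrow> tautology M (subst \<sigma> c)) \<longleftrightarrow>
    (\<forall>(ps, c)\<in>set (snd C). \<forall>ts. length ts = V \<longrightarrow> (\<forall>t\<in>set ts. good ar (nvals M) t \<and> form_code t < B) \<longrightarrow>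
        (\<forall>A\<in>set ps. dtaut M V ts A) \<longrightarrow> dtaut M V ts c)"
  proof (rule ball_cong[OF refl])
    fix x assume x: "x \<in> set (snd C)"
    obtain ps c where "x = (ps, c)" by fastforce
    then show "(case x of (ps, c) \<Rightarrow> \<forall>\<sigma>. (\<forall>x. wf_form ar (\<sigma> x)) \<longrightarrow>
        (\<forall>A\<in>set ps. tautology M (subst \<sigma> A)) \<longrightarrow> tautology M (subst \<sigma> c)) =
      (case x of (ps, c) \<Rightarrow> \<forall>ts. length ts = V \<longrightarrow> (\<forall>t\<in>set ts. good ar (nvals M) t \<and> form_code t < B) \<longrightarrow>
        (\<forall>A\<in>set ps. dtaut M V ts A) \<longrightarrow> dtaut M V ts c)"
      using rl[of ps c] x by simp
  qed
  show ?thesis unfolding t_sound_def using ax rls by simp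
qed

lemma rc_shift2:
  assumes "rcomp k a"
  shows "rcomp (Suc (Suc k)) (\<lambda>e. a (\<lambda>i. e (Suc (Suc i))))"
  by (rule rc_reindex[OF assms]) simp

lemma rc_reindex2:
  assumes "rcomp (Suc k) (\<lambda>e. F (\<lambda>i. e (Suc i)) (e 0))"
  shows "rcomp (Suc (Suc k)) (\<lambda>e. F (\<lambda>i. e (Suc (Suc i))) (e 0))"
proof -
  have "rcomp (Suc (Suc k)) (\<lambda>e. (\<lambda>e. F (\<lambda>i. e (Suc i)) (e 0)) (\<lambda>i. e (if i = 0 then 0 else Suc i)))"
    by (rule rc_reindex) (use assms in auto)
  then show ?thesis by simp
qed

lemma rc_dig[rci]: "rcomp k a \<Longrightarrow> rcomp k b \<Longrightarrow> rcomp k c \<Longrightarrow> rcomp k (\<lambda>e. dig (a e) (b e) (c e))"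
proof (rule rc_lift3[where F=dig])
  show "rcomp 3 (\<lambda>e. dig (e 0) (e 1) (e 2))" unfolding dig_def by (intro rci; simp?)
qed

lemma encs_prec: "encs n f V = prec (\<lambda>j acc. acc + f j * n ^ j) 0 V"
  by (induction V) (simp_all add: encs_def)

lemma rc_encs[rci]:
  assumes "rcomp k n" "rcomp k V" "rcomp (Suc k) (\<lambda>e. f (\<lambda>i. e (Suc i)) (e 0))"
  shows "rcomp k (\<lambda>e. encs (n e) (f e) (V e))"
  unfolding encs_prec
proof (intro rc_prec' assms rc_const rc_add rc_mult rc_pow rc_var)
  show "rcomp (Suc (Suc k)) (\<lambda>e. f (\<lambda>i. e (Suc (Suc i))) (e 0))" by (rule rc_reindex2[OF assms(3)])
  show "rcomp (Suc (Suc k)) (\<lambda>e. n (\<lambda>i. e (Suc (Suc i))))" by (rule rc_shift2[OF assms(1)])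
qed simp_all

definition Gval :: "nat \<Rightarrow> nat \<Rightarrow> nat \<Rightarrow> nat \<Rightarrow> nat \<Rightarrow> nat" where
  "Gval n Tc w m h = (if pfst m = 0 then dig n w (psnd m) else
     lnth (lnth Tc (pfst m - 1))
       (prec (\<lambda>i acc. acc * n + lnth h (m - Suc (lnth (psnd m) i))) 0 (llen (psnd m))))"

definition valc :: "nat \<Rightarrow> nat \<Rightarrow> nat \<Rightarrow> nat \<Rightarrow> nat" where
  "valc n Tc w m = cov (Gval n Tc w) m"

lemma rc_Gval[rci]: "rcomp k a \<Longrightarrow> rcomp k b \<Longrightarrow> rcomp k c \<Longrightarrow> rcomp k d \<Longrightarrow> rcomp k g \<Longrightarrow>
  rcomp k (\<lambda>e. Gval (a e) (b e) (c e) (d e) (g e))"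
proof (rule rc_lift5[where F=Gval])
  show "rcomp 5 (\<lambda>e. Gval (e 0) (e 1) (e 2) (e 3) (e 4))" unfolding Gval_def by (intro rci; simp?)
qed

lemma rc_valc[rci]: "rcomp k a \<Longrightarrow> rcomp k b \<Longrightarrow> rcomp k c \<Longrightarrow> rcomp k d \<Longrightarrow>
  rcomp k (\<lambda>e. valc (a e) (b e) (c e) (d e))"
proof (rule rc_lift4[where F=valc])
  show "rcomp 4 (\<lambda>e. valc (e 0) (e 1) (e 2) (e 3))" unfolding valc_def by (intro rci; simp?)
qed

definition Gwf :: "nat \<Rightarrow> nat \<Rightarrow> nat \<Rightarrow> nat \<Rightarrow> nat" where
  "Gwf AR N m h = (if pfst m = 0 then (if psnd m < N then 1 else 0) else
     if pfst m - 1 < llen AR \<and> llen (psnd m) = lnth AR (pfst m - 1) \<and>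
        (\<forall>i<llen (psnd m). lnth h (m - Suc (lnth (psnd m) i)) = 1) then 1 else 0)"

definition wfc :: "nat \<Rightarrow> nat \<Rightarrow> nat \<Rightarrow> nat" where
  "wfc AR N m = cov (Gwf AR N) m"

lemma rc_Gwf[rci]: "rcomp k a \<Longrightarrow> rcomp k b \<Longrightarrow> rcomp k c \<Longrightarrow> rcomp k d \<Longrightarrow>
  rcomp k (\<lambda>e. Gwf (a e) (b e) (c e) (d e))"
proof (rule rc_lift4[where F=Gwf])
  show "rcomp 4 (\<lambda>e. Gwf (e 0) (e 1) (e 2) (e 3))" unfolding Gwf_def by (intro rci; simp?)
qed

lemma rc_wfc[rci]: "rcomp k a \<Longrightarrow> rcomp k b \<Longrightarrow> rcomp k c \<Longrightarrow>
  rcomp k (\<lambda>e. wfc (a e) (b e) (c e))"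
proof (rule rc_lift3[where F=wfc])
  show "rcomp 3 (\<lambda>e. wfc (e 0) (e 1) (e 2))" unfolding wfc_def by (intro rci; simp?)
qed

definition memc :: "nat \<Rightarrow> nat \<Rightarrow> bool" where
  "memc D v \<longleftrightarrow> (\<exists>i<llen D. lnth D i = v)"

lemma rp_memc[rci]: "rcomp k a \<Longrightarrow> rcomp k b \<Longrightarrow> rpred k (\<lambda>e. memc (a e) (b e))"
proof -
  assume A: "rcomp k a" "rcomp k b"
  have "rpred 2 (\<lambda>e. memc (e 0) (e 1))" unfolding memc_def by (intro rci; simp?)
  then have "rcomp 2 (\<lambda>e. if memc (e 0) (e 1) then 1 else 0)" by (simp add: rpred_def)
  from rc_lift2[OF this A] show ?thesis by (simp add: rpred_def)
qed

lemma lb_prec: "lb A b = prec (\<lambda>_ y. Suc (prod_encode (b, y))) 0 A"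
  by (induction A) auto

lemma rc_lb[rci]: "rcomp k a \<Longrightarrow> rcomp k b \<Longrightarrow> rcomp k (\<lambda>e. lb (a e) (b e))"
proof (rule rc_lift2[where F=lb])
  show "rcomp 2 (\<lambda>e. lb (e 0) (e 1))" unfolding lb_prec by (intro rci; simp?)
qed

lemma cbnd_prec: "cbnd Ac n h = prec (\<lambda>_ y. if y < prod_encode (Ac, lb Ac y) then prod_encode (Ac, lb Ac y) else y) (prod_encode (0, n)) h"
  by (induction h) (auto simp: max_def)

lemma rc_cbnd[rci]: "rcomp k a \<Longrightarrow> rcomp k b \<Longrightarrow> rcomp k c \<Longrightarrow> rcomp k (\<lambda>e. cbnd (a e) (b e) (c e))"
proof (rule rc_lift3[where F=cbnd])
  show "rcomp 3 (\<lambda>e. cbnd (e 0) (e 1) (e 2))" unfolding cbnd_prec by (intro rci; simp?)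
qed


definition dtc :: "nat \<Rightarrow> nat \<Rightarrow> nat \<Rightarrow> nat \<Rightarrow> nat \<Rightarrow> nat \<Rightarrow> nat \<Rightarrow> bool" where
  "dtc n Dc Tc V B s a \<longleftrightarrow> (\<forall>w<n ^ n. memc Dc (valc n Tc (encs n (\<lambda>x. valc n Tc w (dig B s x)) V) a))"

definition crule :: "nat \<Rightarrow> nat \<Rightarrow> nat \<Rightarrow> nat \<Rightarrow> nat \<Rightarrow> nat \<Rightarrow> nat \<Rightarrow> bool" where
  "crule AR n Dc Tc V B r \<longleftrightarrow> (\<forall>s<B ^ V. (\<forall>x<V. wfc AR n (dig B s x) = 1) \<longrightarrow>
     (\<forall>i<llen (pfst r). dtc n Dc Tc V B s (lnth (pfst r) i)) \<longrightarrow> dtc n Dc Tc V B s (psnd r))"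

definition cax :: "nat \<Rightarrow> nat \<Rightarrow> nat \<Rightarrow> nat \<Rightarrow> nat \<Rightarrow> bool" where
  "cax n Dc Tc V a \<longleftrightarrow> (\<forall>w<n ^ V. memc Dc (valc n Tc w a))"

definition decide :: "nat \<Rightarrow> nat" where
  "decide X = (let AR = pfst X; CC = pfst (psnd X); LC = psnd (psnd X); n = pfst LC;
     Dc = pfst (psnd LC); Tc = psnd (psnd LC); AX = pfst CC; RL = psnd CC; V = Suc X;
     B = Suc (cbnd AR n (n ^ (n ^ n))) in
   if n = 0 \<or> ((\<forall>i<llen AX. cax n Dc Tc V (lnth AX i)) \<and>
     (\<forall>j<llen RL. crule AR n Dc Tc V B (lnth RL j)))
   then 1 else 0)"

lemma rc_decide: "rcomp 1 (\<lambda>e. decide (e 0))"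
  unfolding decide_def crule_def dtc_def cax_def by (intro rci; simp?)

lemma lnth_map_enc: "i < length xs \<Longrightarrow> lnth (list_encode (map f xs)) i = f (xs ! i)"
  by (simp add: lnth_enc)

lemma llen_map_enc: "llen (list_encode (map f xs)) = length xs"
  by (simp add: llen_enc)

lemma prec_foldl: "prec (\<lambda>i acc. acc * n + f i) a k = foldl (\<lambda>acc v. acc * n + v) a (map f [0..<k])"
  by (induction k) auto

lemma map_upt_nth: "map (\<lambda>i. f (xs ! i)) [0..<length xs] = map f xs"
  by (rule nth_equalityI) auto

lemma form_code_arg_less: "a \<in> set args \<Longrightarrow> form_code a < form_code (App c args)"
proof -
  assume "a \<in> set args"
  then have "form_code a < list_encode (map form_code args)" by (intro mem_less_enc) simp
  also have "\<dots> \<le> form_code (App c args)" using le_prod_encode_2 by simp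
  finally show ?thesis .
qed

lemma cov_look:
  assumes "j < m"
  shows "lnth (hist G m) (m - Suc j) = cov G j"
  using hist_look[OF assms] .

lemma valc_correct:
  assumes "wf_logic ar M" "nvals M > 0" "wf_form ar t"
  shows "valc (nvals M) (list_encode (map list_encode (tables M))) w (form_code t) = val M (dig (nvals M) w) t"
  using assms(3)
proof (induction t)
  case (Var x)
  then show ?case by (simp add: valc_def cov_def Gval_def)
next
  case (App c args)
  let ?n = "nvals M"
  let ?Tc = "list_encode (map list_encode (tables M))"
  let ?G = "Gval ?n ?Tc w"
  let ?m = "form_code (App c args)"
  let ?b = "list_encode (map form_code args)"
  have wc: "c < length ar" "length args = ar ! c" "\<forall>a\<in>set args. wf_form ar a"
    using App.prems by (auto simp: list_all_iff)
  have lt: "length (tables M) = length ar" "length (tables M ! c) = ?n ^ (ar ! c)"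
    using assms(1) wc(1) unfolding wf_logic_def by auto
  have look: "lnth (hist ?G ?m) (?m - Suc (lnth ?b i)) = val M (dig ?n w) (args ! i)" if i: "i < length args" for i
  proof -
    have "lnth ?b i = form_code (args ! i)" using i by (simp add: lnth_enc)
    moreover have "form_code (args ! i) < ?m" using i by (intro form_code_arg_less) simp
    ultimately have "lnth (hist ?G ?m) (?m - Suc (lnth ?b i)) = cov ?G (form_code (args ! i))"
      using cov_look by simp
    also have "\<dots> = val M (dig ?n w) (args ! i)"
      using App.IH[of "args ! i"] i wc(3) by (simp add: valc_def)
    finally show ?thesis .
  qed
  have idx: "prec (\<lambda>i acc. acc * ?n + lnth (hist ?G ?m) (?m - Suc (lnth ?b i))) 0 (llen ?b)
      = tuple_index ?n (map (val M (dig ?n w)) args)"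
  proof -
    have "prec (\<lambda>i acc. acc * ?n + lnth (hist ?G ?m) (?m - Suc (lnth ?b i))) 0 (llen ?b)
        = foldl (\<lambda>acc v. acc * ?n + v) 0 (map (\<lambda>i. lnth (hist ?G ?m) (?m - Suc (lnth ?b i))) [0..<length args])"
      by (simp add: prec_foldl llen_enc)
    also have "map (\<lambda>i. lnth (hist ?G ?m) (?m - Suc (lnth ?b i))) [0..<length args] = map (\<lambda>i. val M (dig ?n w) (args ! i)) [0..<length args]"
      using look by simp
    also have "\<dots> = map (val M (dig ?n w)) args" by (rule map_upt_nth)
    finally show ?thesis by (simp add: tuple_index_def)
  qed
  have vr: "\<forall>v\<in>set (map (val M (dig ?n w)) args). v < ?n"
    using val_range[OF assms(1)] wc(3) dig_less[OF assms(2)] by auto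
  have ib: "tuple_index ?n (map (val M (dig ?n w)) args) < length (tables M ! c)"
    using tuple_index_bound[OF assms(2) vr] lt wc(2) by simp
  have "valc ?n ?Tc w ?m = ?G ?m (hist ?G ?m)" by (simp add: valc_def cov_def)
  also have "\<dots> = lnth (lnth ?Tc c) (tuple_index ?n (map (val M (dig ?n w)) args))"
    using idx by (simp add: Gval_def)
  also have "\<dots> = tables M ! c ! tuple_index ?n (map (val M (dig ?n w)) args)"
    using lt wc(1) ib by (simp add: lnth_enc)
  finally show ?case by (simp add: truth_fun_def)
qed


lemma wfc_correct:
  "wfc (list_encode ar) N (form_code t) = (if good ar N t then 1 else 0)"
proof (induction t)
  case (Var x)
  then show ?case by (simp add: wfc_def cov_def Gwf_def good_def)
next
  case (App c args)
  let ?AR = "list_encode ar"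
  let ?G = "Gwf ?AR N"
  let ?m = "form_code (App c args)"
  let ?b = "list_encode (map form_code args)"
  have look: "lnth (hist ?G ?m) (?m - Suc (lnth ?b i)) = (if good ar N (args ! i) then 1 else 0)"
    if i: "i < length args" for i
  proof -
    have "lnth ?b i = form_code (args ! i)" using i by (simp add: lnth_enc)
    moreover have "form_code (args ! i) < ?m" using i by (intro form_code_arg_less) simp
    ultimately have "lnth (hist ?G ?m) (?m - Suc (lnth ?b i)) = cov ?G (form_code (args ! i))"
      using cov_look by simp
    also have "\<dots> = (if good ar N (args ! i) then 1 else 0)"
      using App.IH[of "args ! i"] i by (simp add: wfc_def)
    finally show ?thesis .
  qed
  have "wfc ?AR N ?m = ?G ?m (hist ?G ?m)" by (simp add: wfc_def cov_def)
  also have "\<dots> = (if c < length ar \<and> length args = lnth ?AR c \<and>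
        (\<forall>i<length args. lnth (hist ?G ?m) (?m - Suc (lnth ?b i)) = 1) then 1 else 0)"
    by (simp add: Gwf_def llen_enc)
  also have "(c < length ar \<and> length args = lnth ?AR c \<and>
        (\<forall>i<length args. lnth (hist ?G ?m) (?m - Suc (lnth ?b i)) = 1)) \<longleftrightarrow> good ar N (App c args)"
  proof -
    have "(\<forall>i<length args. lnth (hist ?G ?m) (?m - Suc (lnth ?b i)) = 1) \<longleftrightarrow> (\<forall>i<length args. good ar N (args ! i))"
    proof -
      have "lnth (hist ?G ?m) (?m - Suc (lnth ?b i)) = 1 \<longleftrightarrow> good ar N (args ! i)"
        if "i < length args" for i using look[OF that] by simp
      then show ?thesis by blast
    qed
    also have "\<dots> \<longleftrightarrow> (\<forall>a\<in>set args. good ar N a)" by (simp add: all_set_conv_all_nth)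
    finally show ?thesis unfolding good_App by (auto simp: lnth_enc)
  qed
  finally show ?case by simp
qed

lemma wfc_decode:
  "wfc (list_encode ar) N m = 1 \<Longrightarrow> \<exists>t. form_code t = m \<and> good ar N t"
proof (induction m rule: less_induct)
  case (less m)
  let ?AR = "list_encode ar"
  let ?G = "Gwf ?AR N"
  have G: "?G m (hist ?G m) = 1" using less.prems by (simp add: wfc_def cov_def)
  have me: "prod_encode (pfst m, psnd m) = m" by (simp add: pfst_def psnd_def)
  show ?case
  proof (cases "pfst m = 0")
    case True
    then have "psnd m < N" using G by (simp add: Gwf_def split: if_splits)
    moreover have "form_code (Var (psnd m)) = m" using me True by simp
    ultimately show ?thesis by (intro exI[of _ "Var (psnd m)"]) (simp add: good_def)
  next
    case False
    let ?c = "pfst m - 1"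
    let ?L = "list_decode (psnd m)"
    have bL: "list_encode ?L = psnd m" by simp
    define cnd where "cnd = (?c < llen ?AR \<and> llen (psnd m) = lnth ?AR ?c \<and>
      (\<forall>i<llen (psnd m). lnth (hist ?G m) (m - Suc (lnth (psnd m) i)) = 1))"
    have "?G m (hist ?G m) = (if cnd then 1 else 0)"
      unfolding cnd_def by (simp only: Gwf_def[of ?AR N m "hist ?G m"] False if_False)
    then have "cnd" using G by (cases cnd) simp_all
    then have cond: "?c < llen ?AR" "llen (psnd m) = lnth ?AR ?c"
      "\<forall>i<llen (psnd m). lnth (hist ?G m) (m - Suc (lnth (psnd m) i)) = 1"
      unfolding cnd_def by blast+
    have c: "?c < length ar" using cond(1) by (simp add: llen_enc)
    have l1: "llen (psnd m) = length ?L" using llen_enc[of ?L] bL by simp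
    have l2: "lnth ?AR ?c = ar ! ?c" using lnth_enc[OF c] .
    have len: "length ?L = ar ! ?c" using cond(2) l1 l2 by simp
    have ex: "\<exists>t. form_code t = ?L ! i \<and> good ar N t" if i: "i < length ?L" for i
    proof -
      have lt: "?L ! i < m"
      proof -
        have "?L ! i < list_encode ?L" by (rule mem_less_enc) (use i in simp)
        also have "\<dots> \<le> m" using le_prod_encode_2[of "psnd m" "pfst m"] me bL by simp
        finally show ?thesis .
      qed
      have e1: "lnth (psnd m) i = ?L ! i" using lnth_enc[OF i] bL by simp
      have "i < llen (psnd m)" using i l1 by simp
      then have "lnth (hist ?G m) (m - Suc (lnth (psnd m) i)) = 1" using cond(3) by blast
      then have "lnth (hist ?G m) (m - Suc (?L ! i)) = 1" by (simp only: e1)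
      then have "wfc ?AR N (?L ! i) = 1" using cov_look[OF lt] by (simp add: wfc_def)
      then show ?thesis using less.IH[OF lt] by blast
    qed
    define pick where "pick i = (SOME t. form_code t = ?L ! i \<and> good ar N t)" for i
    have P: "form_code (pick i) = ?L ! i \<and> good ar N (pick i)" if "i < length ?L" for i
      unfolding pick_def by (rule someI_ex[OF ex[OF that]])
    define args where "args = map pick [0..<length ?L]"
    have "map form_code args = map (\<lambda>i. form_code (pick i)) [0..<length ?L]"
      by (simp add: args_def)
    also have "\<dots> = map (\<lambda>i. ?L ! i) [0..<length ?L]"
      by (rule map_cong[OF refl]) (use P in simp)
    also have "\<dots> = ?L" by (rule map_nth)
    finally have mc: "map form_code args = ?L" .
    have "form_code (App ?c args) = prod_encode (Suc ?c, list_encode ?L)" using mc by simp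
    also have "\<dots> = m" using False me bL by simp
    finally have fc: "form_code (App ?c args) = m" .
    have "good ar N (App ?c args)"
      unfolding good_App using c len P by (auto simp: args_def)
    then show ?thesis using fc by blast
  qed
qed

lemma memc_correct: "memc (list_encode ds) v \<longleftrightarrow> v \<in> set ds"
  unfolding memc_def by (auto simp: llen_enc lnth_enc in_set_conv_nth)

lemma vars_le_code: "x \<in> vars t \<Longrightarrow> x \<le> form_code t"
proof (induction t)
  case (Var y)
  then show ?case using le_prod_encode_2 by simp
next
  case (App c args)
  then obtain a where a: "a \<in> set args" "x \<in> vars a" by auto
  then have "x \<le> form_code a" using App.IH by blast
  also have "\<dots> < form_code (App c args)" by (rule form_code_arg_less[OF a(1)])
  finally show ?case by simp
qed


lemma dtc_iff:
  assumes "wf_logic ar M" "nvals M > 0" "length ts = V" "\<forall>x<V. form_code (ts ! x) = dig B s x"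
    "\<forall>t\<in>set ts. good ar (nvals M) t" "wf_form ar A"
  shows "dtc (nvals M) (list_encode (fst (snd M))) (list_encode (map list_encode (tables M))) V B s (form_code A)
    \<longleftrightarrow> dtaut M V ts A"
proof -
  let ?n = "nvals M"
  let ?Tc = "list_encode (map list_encode (tables M))"
  have e: "encs ?n (\<lambda>x. valc ?n ?Tc w (dig B s x)) V = envs M V ts w" for w
    unfolding envs_def encs_def
  proof (rule sum.cong[OF refl])
    fix x assume "x \<in> {..<V}"
    then have x: "x < V" by simp
    have g: "good ar ?n (ts ! x)" using assms(3,5) x by simp
    have "valc ?n ?Tc w (dig B s x) = valc ?n ?Tc w (form_code (ts ! x))" using assms(4) x by simp
    also have "\<dots> = val M (dig ?n w) (ts ! x)"
      by (rule valc_correct[OF assms(1,2)]) (use g in \<open>simp add: good_def\<close>)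
    finally show "valc ?n ?Tc w (dig B s x) * ?n ^ x = val M (dig ?n w) (ts ! x) * ?n ^ x" by simp
  qed
  show ?thesis
    unfolding dtc_def dtaut_def e valc_correct[OF assms(1,2,6)] memc_correct
    by (simp add: designated_def)
qed

lemma rule_corr:
  assumes "wf_logic ar M" "nvals M > 0" "B > 0" "\<forall>p\<in>set ps. wf_form ar p" "wf_form ar c"
  shows "crule (list_encode ar) (nvals M) (list_encode (fst (snd M))) (list_encode (map list_encode (tables M))) V B
      (prod_encode (list_encode (map form_code ps), form_code c))
    \<longleftrightarrow> (\<forall>ts. length ts = V \<longrightarrow> (\<forall>t\<in>set ts. good ar (nvals M) t \<and> form_code t < B) \<longrightarrow>
        (\<forall>A\<in>set ps. dtaut M V ts A) \<longrightarrow> dtaut M V ts c)"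
  (is "?C \<longleftrightarrow> ?S")
proof -
  let ?n = "nvals M"
  let ?Dc = "list_encode (fst (snd M))"
  let ?Tc = "list_encode (map list_encode (tables M))"
  let ?AR = "list_encode ar"
  have C: "?C \<longleftrightarrow> (\<forall>s<B ^ V. (\<forall>x<V. wfc ?AR ?n (dig B s x) = 1) \<longrightarrow>
     (\<forall>i<length ps. dtc ?n ?Dc ?Tc V B s (form_code (ps ! i))) \<longrightarrow> dtc ?n ?Dc ?Tc V B s (form_code c))"
    unfolding crule_def by (simp add: llen_enc lnth_enc)
  show ?thesis
  proof
    assume ?C
    then have Ch: "\<forall>s<B ^ V. (\<forall>x<V. wfc ?AR ?n (dig B s x) = 1) \<longrightarrow>
     (\<forall>i<length ps. dtc ?n ?Dc ?Tc V B s (form_code (ps ! i))) \<longrightarrow> dtc ?n ?Dc ?Tc V B s (form_code c)"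
      using C by blast
    show ?S
    proof (intro allI impI)
      fix ts assume l: "length ts = V" and g: "\<forall>t\<in>set ts. good ar ?n t \<and> form_code t < B"
        and p: "\<forall>A\<in>set ps. dtaut M V ts A"
      let ?s = "encs B (\<lambda>x. form_code (ts ! x)) V"
      have fb: "\<And>x. x < V \<Longrightarrow> form_code (ts ! x) < B" using g l by simp
      have sB: "?s < B ^ V" by (rule encs_bound) (use fb in blast)
      have d: "\<forall>x<V. form_code (ts ! x) = dig B ?s x" using dig_encs[of V _ B] fb by auto
      have gt: "\<forall>t\<in>set ts. good ar ?n t" using g by blast
      have w: "\<forall>x<V. wfc ?AR ?n (dig B ?s x) = 1"
      proof (intro allI impI)
        fix x assume x: "x < V"
        then have "good ar ?n (ts ! x)" using gt l by simp
        then have "wfc ?AR ?n (form_code (ts ! x)) = 1" by (simp add: wfc_correct)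
        then show "wfc ?AR ?n (dig B ?s x) = 1" using d x by simp
      qed
      have pd: "\<forall>i<length ps. dtc ?n ?Dc ?Tc V B ?s (form_code (ps ! i))"
        using dtc_iff[OF assms(1,2) l d gt] assms(4) p by simp
      have "dtc ?n ?Dc ?Tc V B ?s (form_code c)" using Ch sB w pd by blast
      then show "dtaut M V ts c" using dtc_iff[OF assms(1,2) l d gt assms(5)] by simp
    qed
  next
    assume S: ?S
    show ?C unfolding C
    proof (intro allI impI)
      fix s assume sB: "s < B ^ V" and w: "\<forall>x<V. wfc ?AR ?n (dig B s x) = 1"
        and pd: "\<forall>i<length ps. dtc ?n ?Dc ?Tc V B s (form_code (ps ! i))"
      have ex: "\<exists>t. form_code t = dig B s x \<and> good ar ?n t" if "x < V" for x
        using wfc_decode w that by blast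
      define pick where "pick x = (SOME t. form_code t = dig B s x \<and> good ar ?n t)" for x
      have P: "form_code (pick x) = dig B s x \<and> good ar ?n (pick x)" if "x < V" for x
        unfolding pick_def by (rule someI_ex[OF ex[OF that]])
      define ts where "ts = map pick [0..<V]"
      have l: "length ts = V" by (simp add: ts_def)
      have d: "\<forall>x<V. form_code (ts ! x) = dig B s x" using P by (simp add: ts_def)
      have gt: "\<forall>t\<in>set ts. good ar ?n t" using P by (auto simp: ts_def)
      have g: "\<forall>t\<in>set ts. good ar ?n t \<and> form_code t < B"
      proof
        fix t assume "t \<in> set ts"
        then obtain x where x: "x < V" "t = pick x" by (auto simp: ts_def)
        then show "good ar ?n t \<and> form_code t < B" using P[OF x(1)] dig_less[OF assms(3)] by simp
      qed
      have p: "\<forall>A\<in>set ps. dtaut M V ts A"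
      proof
        fix A assume "A \<in> set ps"
        then obtain i where i: "i < length ps" "A = ps ! i" by (auto simp: in_set_conv_nth)
        then show "dtaut M V ts A"
          using dtc_iff[OF assms(1,2) l d gt, of A] assms(4) pd by simp
      qed
      have "dtaut M V ts c" using S l g p by blast
      then show "dtc ?n ?Dc ?Tc V B s (form_code c)" using dtc_iff[OF assms(1,2) l d gt assms(5)] by simp
    qed
  qed
qed


lemma ball_lnth: "(\<forall>i<llen (list_encode (map f xs)). P (lnth (list_encode (map f xs)) i)) \<longleftrightarrow> (\<forall>x\<in>set xs. P (f x))"
  by (auto simp: llen_enc lnth_enc all_set_conv_all_nth)

definition rcode :: "form list \<times> form \<Rightarrow> nat" where
  "rcode r = (case r of (ps, c) \<Rightarrow> prod_encode (list_encode (map form_code ps), form_code c))"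

lemma calc_code_rcode: "calc_code C = prod_encode (list_encode (map form_code (fst C)), list_encode (map rcode (snd C)))"
  unfolding calc_code_def rcode_def by simp

lemma calc_le_input: "calc_code C \<le> input_code ar C M"
proof -
  have "calc_code C \<le> prod_encode (calc_code C, logic_code M)" by (rule le_prod_encode_1)
  also have "\<dots> \<le> input_code ar C M" unfolding input_code_def by (rule le_prod_encode_2)
  finally show ?thesis .
qed

lemma ax_code_le: "A \<in> set (fst C) \<Longrightarrow> form_code A \<le> calc_code C"
proof -
  assume "A \<in> set (fst C)"
  then have "form_code A < list_encode (map form_code (fst C))" by (intro mem_less_enc) simp
  also have "\<dots> \<le> calc_code C" unfolding calc_code_rcode by (rule le_prod_encode_1)
  finally show ?thesis by simp
qed

lemma rule_code_le:
  assumes "(ps, c) \<in> set (snd C)"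
  shows "\<forall>p\<in>set ps. form_code p \<le> calc_code C" "form_code c \<le> calc_code C"
proof -
  have "rcode (ps, c) < list_encode (map rcode (snd C))" using assms by (intro mem_less_enc) simp
  also have "\<dots> \<le> calc_code C" unfolding calc_code_rcode by (rule le_prod_encode_2)
  finally have r: "rcode (ps, c) \<le> calc_code C" by simp
  show "\<forall>p\<in>set ps. form_code p \<le> calc_code C"
  proof
    fix p assume "p \<in> set ps"
    then have "form_code p < list_encode (map form_code ps)" by (intro mem_less_enc) simp
    also have "\<dots> \<le> rcode (ps, c)" unfolding rcode_def by (simp add: le_prod_encode_1)
    finally show "form_code p \<le> calc_code C" using r by simp
  qed
  have "form_code c \<le> rcode (ps, c)" unfolding rcode_def by (simp add: le_prod_encode_2)
  then show "form_code c \<le> calc_code C" using r by simp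
qed

lemma decide_unfold:
  "decide (input_code ar C M) =
    (let n = nvals M; Dc = list_encode (fst (snd M)); Tc = list_encode (map list_encode (tables M));
         V = Suc (input_code ar C M); B = Suc (cbnd (list_encode ar) n (n ^ (n ^ n))) in
     if n = 0 \<or> ((\<forall>A\<in>set (fst C). cax n Dc Tc V (form_code A)) \<and>
        (\<forall>r\<in>set (snd C). crule (list_encode ar) n Dc Tc V B (rcode r))) then 1 else 0)"
proof -
  have i: "input_code ar C M = prod_encode (list_encode ar, prod_encode (
     prod_encode (list_encode (map form_code (fst C)), list_encode (map rcode (snd C))),
     prod_encode (nvals M, prod_encode (list_encode (fst (snd M)), list_encode (map list_encode (tables M))))))"
    unfolding input_code_def calc_code_rcode logic_code_def nvals_def tables_def ..
  have h1: "pfst (input_code ar C M) = list_encode ar" by (subst i) (rule pfst_pe)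
  have h2: "pfst (pfst (psnd (input_code ar C M))) = list_encode (map form_code (fst C))"
    by (subst i) (simp only: pfst_pe psnd_pe)
  have h3: "psnd (pfst (psnd (input_code ar C M))) = list_encode (map rcode (snd C))"
    by (subst i) (simp only: pfst_pe psnd_pe)
  have h4: "pfst (psnd (psnd (input_code ar C M))) = nvals M"
    by (subst i) (simp only: pfst_pe psnd_pe)
  have h5: "pfst (psnd (psnd (psnd (input_code ar C M)))) = list_encode (fst (snd M))"
    by (subst i) (simp only: pfst_pe psnd_pe)
  have h6: "psnd (psnd (psnd (psnd (input_code ar C M)))) = list_encode (map list_encode (tables M))"
    by (subst i) (simp only: pfst_pe psnd_pe)
  show ?thesis
    unfolding decide_def Let_def h1 h2 h3 h4 h5 h6 ball_lnth ..
qed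

lemma decide_correct:
  assumes "wf_calc ar C" "wf_logic ar M"
  shows "decide (input_code ar C M) = (if t_sound ar C M then 1 else 0)"
proof (cases "nvals M = 0")
  case True
  have "tautology M A" for A unfolding tautology_def using True by simp
  then have "t_sound ar C M" unfolding t_sound_def by auto
  then show ?thesis using True by (simp add: decide_unfold)
next
  case False
  then have n0: "nvals M > 0" by simp
  let ?X = "input_code ar C M"
  let ?n = "nvals M"
  let ?K = "?n ^ (?n ^ ?n)"
  let ?B = "Suc (cbnd (list_encode ar) ?n ?K)"
  let ?Dc = "list_encode (fst (snd M))"
  let ?Tc = "list_encode (map list_encode (tables M))"
  have wfa: "\<forall>A\<in>set (fst C). wf_form ar A"
    and wfr: "\<forall>(ps, c)\<in>set (snd C). list_all (wf_form ar) ps \<and> wf_form ar c"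
    using assms(1) unfolding wf_calc_def by (auto simp: list_all_iff)
  have va: "\<forall>A\<in>set (fst C). vars A \<subseteq> {..<Suc ?X}"
  proof (intro ballI subsetI)
    fix A x assume "A \<in> set (fst C)" "x \<in> vars A"
    then have "x \<le> ?X"
      using order_trans[OF vars_le_code[OF \<open>x \<in> vars A\<close>] order_trans[OF ax_code_le[OF \<open>A \<in> set (fst C)\<close>] calc_le_input]]
      by simp
    then show "x \<in> {..<Suc ?X}" by simp
  qed
  have vr: "\<forall>(ps, c)\<in>set (snd C). (\<forall>p\<in>set ps. vars p \<subseteq> {..<Suc ?X}) \<and> vars c \<subseteq> {..<Suc ?X}"
  proof (intro ballI)
    fix r assume r: "r \<in> set (snd C)"
    obtain ps c where rp: "r = (ps, c)" by fastforce
    have rc: "(ps, c) \<in> set (snd C)" using r rp by simp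
    have le: "form_code p \<le> ?X" if "p \<in> set ps" for p
      using order_trans[OF bspec[OF rule_code_le(1)[OF rc] that] calc_le_input] .
    have lec: "form_code c \<le> ?X"
      using order_trans[OF rule_code_le(2)[OF rc] calc_le_input] .
    have vb: "vars t \<subseteq> {..<Suc ?X}" if "form_code t \<le> ?X" for t
    proof
      fix x assume "x \<in> vars t"
      then have "x \<le> ?X" using vars_le_code[of x t] that by simp
      then show "x \<in> {..<Suc ?X}" by simp
    qed
    have "(\<forall>p\<in>set ps. vars p \<subseteq> {..<Suc ?X}) \<and> vars c \<subseteq> {..<Suc ?X}"
      using vb le lec by blast
    then show "case r of (ps, c) \<Rightarrow> (\<forall>p\<in>set ps. vars p \<subseteq> {..<Suc ?X}) \<and> vars c \<subseteq> {..<Suc ?X}"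
      using rp by simp
  qed
  have cb: "form_code t < ?B" if "good ar ?n t" "height t \<le> ?K" for t
  proof -
    have "form_code t \<le> cbnd (list_encode ar) ?n ?K"
    proof (rule code_bound[OF that])
      show "length ar \<le> list_encode ar" by (rule length_le_enc)
      show "\<forall>a\<in>set ar. a \<le> list_encode ar" using mem_less_enc less_imp_le by blast
    qed
    then show ?thesis by simp
  qed
  note char = t_sound_char[OF assms n0 va vr cb]
  have ax: "cax ?n ?Dc ?Tc (Suc ?X) (form_code A) \<longleftrightarrow> (\<forall>w<?n ^ Suc ?X. val M (dig ?n w) A \<in> designated M)"
    if "A \<in> set (fst C)" for A
    unfolding cax_def valc_correct[OF assms(2) n0 bspec[OF wfa that]] memc_correct
    by (simp add: designated_def)
  have axs: "(\<forall>A\<in>set (fst C). cax ?n ?Dc ?Tc (Suc ?X) (form_code A)) \<longleftrightarrow>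
      (\<forall>A\<in>set (fst C). \<forall>w<?n ^ Suc ?X. val M (dig ?n w) A \<in> designated M)"
    using ax by blast
  have rls: "(\<forall>r\<in>set (snd C). crule (list_encode ar) ?n ?Dc ?Tc (Suc ?X) ?B (rcode r)) \<longleftrightarrow>
      (\<forall>(ps, c)\<in>set (snd C). \<forall>ts. length ts = Suc ?X \<longrightarrow> (\<forall>t\<in>set ts. good ar ?n t \<and> form_code t < ?B) \<longrightarrow>
        (\<forall>A\<in>set ps. dtaut M (Suc ?X) ts A) \<longrightarrow> dtaut M (Suc ?X) ts c)"
  proof (rule ball_cong[OF refl])
    fix r assume r: "r \<in> set (snd C)"
    obtain ps c where rp: "r = (ps, c)" by fastforce
    have w: "\<forall>p\<in>set ps. wf_form ar p" "wf_form ar c" using wfr r rp by (auto simp: list_all_iff)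
    show "crule (list_encode ar) ?n ?Dc ?Tc (Suc ?X) ?B (rcode r) \<longleftrightarrow>
      (case r of (ps, c) \<Rightarrow> \<forall>ts. length ts = Suc ?X \<longrightarrow> (\<forall>t\<in>set ts. good ar ?n t \<and> form_code t < ?B) \<longrightarrow>
        (\<forall>A\<in>set ps. dtaut M (Suc ?X) ts A) \<longrightarrow> dtaut M (Suc ?X) ts c)"
      unfolding rp rcode_def using rule_corr[OF assms(2) n0 _ w, of ?B "Suc ?X"] by simp
  qed
  have ts: "t_sound ar C M \<longleftrightarrow> ((\<forall>A\<in>set (fst C). cax ?n ?Dc ?Tc (Suc ?X) (form_code A)) \<and>
        (\<forall>r\<in>set (snd C). crule (list_encode ar) ?n ?Dc ?Tc (Suc ?X) ?B (rcode r)))"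
    using char axs rls by simp
  show ?thesis
    unfolding decide_unfold Let_def using ts False by simp
qed

theorem proposition5:
  shows "\<exists>f :: recf. \<forall>ar C M. wf_calc ar C \<and> wf_logic ar M \<longrightarrow>
           rec_eval f [input_code ar C M] (if t_sound ar C M then 1 else 0)"
proof -
  obtain f where f: "\<forall>e. rec_eval f (map e [0..<1]) (decide (e 0))"
    using rc_decide unfolding rcomp_def by blast
  have ev: "rec_eval f [X] (decide X)" for X
    using f[rule_format, of "\<lambda>_. X"] by simp
  show ?thesis
  proof (intro exI[of _ f] allI impI)
    fix ar C M assume "wf_calc ar C \<and> wf_logic ar M"
    then have "decide (input_code ar C M) = (if t_sound ar C M then 1 else 0)"
      by (intro decide_correct) auto
    then show "rec_eval f [input_code ar C M] (if t_sound ar C M then 1 else 0)"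
      using ev[of "input_code ar C M"] by simp
  qed
qed

end
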